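(* Let $Y$ be a compact metric space with more than one point and let $g\colon Y\to Y$ be a topologically mixing TA-map. Then there exist $\varepsilon>0$, $k\in\mathbb N$ and a dense Mycielski set $T\subset Y$ with $g^k(T)\subset T$ which is syndetically $\varepsilon$-scrambled for $g$.
   Context: A continuous surjection $g\colon Y\to Y$ is c-expansive with constant $\beta>0$ if for any two full orbits $(x_i)_{i\in\mathbb Z},(y_i)_{i\in\mathbb Z}$ ($g(x_i)=x_{i+1}$, $g(y_i)=y_{i+1}$) with $x_0\ne y_0$ there is $n\in\mathbb Z$ with $d(x_n,y_n)>\beta$. $g$ has the shadowing property if for every $\varepsilon>0$ there is $\delta>0$ such that every sequence $(x_i)_{i\ge0}$ with $d(g(x_i),x_{i+1})<\delta$ for all $i$ is $\varepsilon$-traced by some $z$, i.e. $d(g^i(z),x_i)<\varepsilon$ for all $i\ge0$. A TA-map is a c-expansive continuous surjection with shadowing. Mixing: $\{n: g^n(U)\cap V\neq\emptyset\}$ cofinite for all nonempty open $U,V$. Syndetic: subset of $\mathbb N$ meeting every set with arbitrarily long runs of consecutive integers. Syndetically $\varepsilon$-scrambled set: at least two points, every pair of distinct points $x,y$ satisfies $\{n:d(g^nx,g^ny)<\eta\}$ syndetic for all $\eta>0$, $d(g^nx,g^ny)\not\to0$, and $\limsup_n d(g^nx,g^ny)\ge\varepsilon$. Mycielski set: countable union of Cantor sets. *)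

theory Defs
  imports "HOL-Analysis.Analysis" "HOL-Library.Liminf_Limsup"
begin

definition full_orbit :: "'a set \<Rightarrow> ('a \<Rightarrow> 'a) \<Rightarrow> (int \<Rightarrow> 'a) \<Rightarrow> bool" where
  "full_orbit Y g x \<longleftrightarrow> (\<forall>i. x i \<in> Y \<and> g (x i) = x (i + 1))"

definition c_expansive_with :: "'a::metric_space set \<Rightarrow> ('a \<Rightarrow> 'a) \<Rightarrow> real \<Rightarrow> bool" where
  "c_expansive_with Y g \<beta> \<longleftrightarrow> \<beta> > 0 \<and>
     (\<forall>x y. full_orbit Y g x \<and> full_orbit Y g y \<and> x 0 \<noteq> y 0 \<longrightarrow>
        (\<exists>n::int. dist (x n) (y n) > \<beta>))"

definition continuous_surjection :: "'a::metric_space set \<Rightarrow> ('a \<Rightarrow> 'a) \<Rightarrow> bool" where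
  "continuous_surjection Y g \<longleftrightarrow> continuous_on Y g \<and> g ` Y = Y"

definition c_expansive :: "'a::metric_space set \<Rightarrow> ('a \<Rightarrow> 'a) \<Rightarrow> bool" where
  "c_expansive Y g \<longleftrightarrow> continuous_surjection Y g \<and> (\<exists>\<beta>. c_expansive_with Y g \<beta>)"

definition shadowing :: "'a::metric_space set \<Rightarrow> ('a \<Rightarrow> 'a) \<Rightarrow> bool" where
  "shadowing Y g \<longleftrightarrow>
     (\<forall>\<epsilon>>0. \<exists>\<delta>>0. \<forall>x::nat \<Rightarrow> 'a.
        (\<forall>i. x i \<in> Y) \<and> (\<forall>i. dist (g (x i)) (x (Suc i)) < \<delta>) \<longrightarrow>
        (\<exists>z\<in>Y. \<forall>i. dist ((g ^^ i) z) (x i) < \<epsilon>))"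

definition TA_map :: "'a::metric_space set \<Rightarrow> ('a \<Rightarrow> 'a) \<Rightarrow> bool" where
  "TA_map Y g \<longleftrightarrow> c_expansive Y g \<and> shadowing Y g"

definition top_mixing :: "'a::metric_space set \<Rightarrow> ('a \<Rightarrow> 'a) \<Rightarrow> bool" where
  "top_mixing Y g \<longleftrightarrow>
     (\<forall>U V. openin (top_of_set Y) U \<and> U \<noteq> {} \<and> openin (top_of_set Y) V \<and> V \<noteq> {} \<longrightarrow>
        finite {n. (g ^^ n) ` U \<inter> V = {}})"

definition thick :: "nat set \<Rightarrow> bool" where
  "thick A \<longleftrightarrow> (\<forall>L. \<exists>m. {m..<m+L} \<subseteq> A)"

definition syndetic :: "nat set \<Rightarrow> bool" where
  "syndetic S \<longleftrightarrow> (\<forall>A. thick A \<longrightarrow> S \<inter> A \<noteq> {})"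

definition synd_scrambled :: "'a::metric_space set \<Rightarrow> ('a \<Rightarrow> 'a) \<Rightarrow> real \<Rightarrow> 'a set \<Rightarrow> bool" where
  "synd_scrambled Y g \<epsilon> T \<longleftrightarrow>
     (\<exists>x\<in>T. \<exists>y\<in>T. x \<noteq> y) \<and>
     (\<forall>x\<in>T. \<forall>y\<in>T. x \<noteq> y \<longrightarrow>
        (\<forall>\<eta>>0. syndetic {n. dist ((g ^^ n) x) ((g ^^ n) y) < \<eta>}) \<and>
        \<not> ((\<lambda>n. dist ((g ^^ n) x) ((g ^^ n) y)) \<longlonglongrightarrow> 0) \<and>
        limsup (\<lambda>n. ereal (dist ((g ^^ n) x) ((g ^^ n) y))) \<ge> ereal \<epsilon>)"

definition cantor_set :: "'a::metric_space set \<Rightarrow> bool" where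
  "cantor_set C \<longleftrightarrow>
     top_of_set C homeomorphic_space
       product_topology (\<lambda>_::nat. discrete_topology (UNIV::bool set)) UNIV"

definition mycielski_set :: "'a::metric_space set \<Rightarrow> bool" where
  "mycielski_set T \<longleftrightarrow> (\<exists>\<C>. countable \<C> \<and> (\<forall>C\<in>\<C>. cantor_set C) \<and> T = \<Union>\<C>)"

end

theory Submission
  imports Defs
begin

lemma nest_nonempty:
  fixes F :: "nat \<Rightarrow> 'b::metric_space set"
  assumes "\<And>n. compact (F n)" "\<And>n. F n \<noteq> {}" "\<And>n. F (Suc n) \<subseteq> F n"
  shows "\<exists>x. \<forall>n. x \<in> F n"
proof -
  have mono: "F n \<subseteq> F m" if "m \<le> n" for m n
    using that lift_Suc_antimono_le[of F, OF assms(3)] by blast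
  have "F 0 \<inter> (\<Inter>i\<in>UNIV. F i) \<noteq> {}"
  proof (rule compact_imp_fip_image[OF assms(1)])
    show "closed (F i)" for i using assms(1) compact_imp_closed by blast
    fix I' :: "nat set" assume "finite I'"
    have "F (Max (insert 0 I')) \<subseteq> F 0 \<inter> (\<Inter>i\<in>I'. F i)"
    proof
      fix x assume x: "x \<in> F (Max (insert 0 I'))"
      have "x \<in> F i" if "i \<in> insert 0 I'" for i
        using mono[of i "Max (insert 0 I')"] x that \<open>finite I'\<close> by auto
      then show "x \<in> F 0 \<inter> (\<Inter>i\<in>I'. F i)" by auto
    qed
    then show "F 0 \<inter> (\<Inter>i\<in>I'. F i) \<noteq> {}" using assms(2) by blast
  qed
  then show ?thesis by auto
qed

lemma funpow_cont:
  assumes "continuous_on Y g" "g ` Y \<subseteq> Y"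
  shows "continuous_on Y (g ^^ n) \<and> (g ^^ n) ` Y \<subseteq> Y"
proof (induction n)
  case 0 then show ?case by (simp add: continuous_on_id)
next
  case (Suc n)
  then show ?case using assms
    by (auto intro: continuous_on_compose2[of Y g])
qed



lemma compact_window:
  fixes g :: "'b::metric_space \<Rightarrow> 'b"
  assumes Y: "compact Y" and gc: "continuous_on Y g" and gY: "g ` Y \<subseteq> Y"
    and D: "\<And>i. closed (D i)"
  shows "compact {w\<in>Y. \<forall>i\<le>m. (g^^i) w \<in> D i}"
proof -
  have eq: "{w\<in>Y. \<forall>i\<le>m. (g^^i) w \<in> D i} = Y \<inter> (\<Inter>i\<in>{..m}. Y \<inter> (g^^i) -` D i)"
    by auto
  have cl: "closed (Y \<inter> (g^^i) -` D i)" for i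
    using continuous_closed_preimage[OF funpow_cont[OF gc gY, THEN conjunct1] compact_imp_closed[OF Y] D] .
  have "closed (\<Inter>i\<in>{..m}. Y \<inter> (g^^i) -` D i)" 
    using cl by blast
  then show ?thesis unfolding eq by (rule compact_Int_closed[OF Y])
qed
lemma compact_window_image:
  fixes g :: "'b::metric_space \<Rightarrow> 'b"
  assumes Y: "compact Y" and gc: "continuous_on Y g" and gY: "g ` Y \<subseteq> Y"
    and D: "\<And>i. closed (D i)"
  shows "compact ((g^^j) ` {w\<in>Y. \<forall>i\<le>m. (g^^i) w \<in> D i})"
  apply (rule compact_continuous_image[OF _ compact_window[OF Y gc gY D]])
  by (rule continuous_on_subset[OF funpow_cont[OF gc gY, THEN conjunct1]]) blast

lemma backward_limit:
  fixes g :: "'b::metric_space \<Rightarrow> 'b" and C :: "int \<Rightarrow> 'b set"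
  assumes Y: "compact Y" and gc: "continuous_on Y g" and gY: "g ` Y \<subseteq> Y"
    and C: "\<And>t. closed (C t)"
    and H: "\<And>n. \<exists>w\<in>Y. \<forall>i\<le>2*n. (g^^i) w \<in> C (int i - int n)"
  shows "\<exists>X. \<forall>t. X t \<in> Y \<and> g (X t) = X (t+1) \<and> X t \<in> C t"
proof -
  define Good where "Good t x \<longleftrightarrow> x \<in> Y \<and>
     (\<forall>n m. \<exists>w\<in>Y. (g^^n) w = x \<and> (\<forall>i\<le>m. (g^^i) w \<in> C (t - int n + int i)))" for t x
  have gpow: "(g^^i) w \<in> Y" if "w \<in> Y" for i w using funpow_cont[OF gc gY] that by blast
  have fromwin: "Good t x" if xY: "x \<in> Y" and
     W: "\<And>j. \<exists>w\<in>Y. (g^^j) w = x \<and> (\<forall>i\<le>2*j. (g^^i) w \<in> C (t - int j + int i))" for t x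
  proof -
    have "\<exists>w\<in>Y. (g^^n) w = x \<and> (\<forall>i\<le>m. (g^^i) w \<in> C (t - int n + int i))" for n m
    proof -
      obtain w where w: "w \<in> Y" "(g^^(n+m)) w = x"
        "\<And>i. i\<le>2*(n+m) \<Longrightarrow> (g^^i) w \<in> C (t - int (n+m) + int i)"
        using W[of "n+m"] by blast
      show ?thesis
      proof (intro bexI conjI allI impI)
        show "(g^^m) w \<in> Y" using gpow w(1) .
        show "(g^^n) ((g^^m) w) = x" using w(2) by (simp add: funpow_add)
        fix i assume "i \<le> m"
        then have "(g^^(i+m)) w \<in> C (t - int (n+m) + int (i+m))" by (intro w(3)) auto
        then show "(g^^i) ((g^^m) w) \<in> C (t - int n + int i)"
          by (simp add: funpow_add algebra_simps)
      qed
    qed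
    then show ?thesis unfolding Good_def using xY by blast
  qed
  define N where "N n = (g^^n) ` {w\<in>Y. \<forall>i\<le>2*n. (g^^i) w \<in> C (int i - int n)}" for n
  have "\<exists>x. \<forall>n. x \<in> N n"
  proof (rule nest_nonempty)
    show "compact (N n)" for n unfolding N_def
      by (rule compact_window_image[OF Y gc gY]) (rule C)
    show "N n \<noteq> {}" for n using H[of n] unfolding N_def by blast
    show "N (Suc n) \<subseteq> N n" for n
    proof
      fix x assume "x \<in> N (Suc n)"
      then obtain w where w: "w \<in> Y" "x = (g^^Suc n) w"
        "\<And>i. i \<le> 2 * Suc n \<Longrightarrow> (g^^i) w \<in> C (int i - int (Suc n))" unfolding N_def by blast
      have "g w \<in> {w\<in>Y. \<forall>i\<le>2*n. (g^^i) w \<in> C (int i - int n)}"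
      proof (safe)
        show "g w \<in> Y" using w(1) gY by blast
        fix i assume "i \<le> 2*n"
        then have "(g^^Suc i) w \<in> C (int (Suc i) - int (Suc n))" by (intro w(3)) auto
        then show "(g^^i) (g w) \<in> C (int i - int n)" by (simp add: funpow_swap1)
      qed
      moreover have "x = (g^^n) (g w)" using w(2) by (simp add: funpow_swap1)
      ultimately show "x \<in> N n" unfolding N_def by blast
    qed
  qed
  then obtain x0 where x0: "\<And>n. x0 \<in> N n" by blast
  have G0: "Good 0 x0"
  proof (rule fromwin)
    show "x0 \<in> Y" using x0[of 0] unfolding N_def by auto
    fix j show "\<exists>w\<in>Y. (g^^j) w = x0 \<and> (\<forall>i\<le>2*j. (g^^i) w \<in> C (0 - int j + int i))"
      using x0[of j] unfolding N_def by auto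
  qed
  have P1: "x \<in> C t" if G: "Good t x" for t x
  proof -
    obtain w where "w \<in> Y" "(g^^0) w = x" "\<forall>i\<le>0. (g^^i) w \<in> C (t - int 0 + int i)"
      using G unfolding Good_def by blast
    then show ?thesis by simp
  qed
  have PY: "x \<in> Y" if "Good t x" for t x using that unfolding Good_def by blast
  have P2: "Good (t+1) (g x)" if G: "Good t x" for t x
  proof -
    have xY: "x \<in> Y" using G unfolding Good_def by blast
    have "\<exists>w\<in>Y. (g^^n) w = g x \<and> (\<forall>i\<le>m. (g^^i) w \<in> C (t + 1 - int n + int i))" for n m
    proof (cases n)
      case 0
      obtain w where w: "w \<in> Y" "(g^^0) w = x" "\<And>i. i\<le>Suc m \<Longrightarrow> (g^^i) w \<in> C (t - int 0 + int i)"
        using G unfolding Good_def by blast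
      show ?thesis
      proof (intro bexI conjI allI impI)
        show "g x \<in> Y" using xY gY by blast
        show "(g^^n) (g x) = g x" using 0 by simp
        fix i assume "i \<le> m"
        then have "(g^^Suc i) w \<in> C (t - int 0 + int (Suc i))" by (intro w(3)) auto
        then show "(g^^i) (g x) \<in> C (t + 1 - int n + int i)" using w(2) 0
          by (simp add: funpow_swap1 algebra_simps)
      qed
    next
      case (Suc n')
      obtain w where w: "w \<in> Y" "(g^^n') w = x" "\<And>i. i\<le>m \<Longrightarrow> (g^^i) w \<in> C (t - int n' + int i)"
        using G unfolding Good_def by blast
      show ?thesis
      proof (intro bexI conjI allI impI)
        show "w \<in> Y" by fact
        show "(g^^n) w = g x" using Suc w(2) by simp
        fix i assume "i \<le> m"
        then show "(g^^i) w \<in> C (t + 1 - int n + int i)" using w(3)[of i] Suc by (simp add: algebra_simps)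
      qed
    qed
    then show ?thesis unfolding Good_def using xY gY by blast
  qed
  have P3: "\<exists>x'. Good (t-1) x' \<and> g x' = x" if G: "Good t x" for t x
  proof -
    define M where "M j = {x'\<in>Y. g x' = x} \<inter>
        (g^^j) ` {w\<in>Y. \<forall>i\<le>2*j. (g^^i) w \<in> C (t - 1 - int j + int i)}" for j
    have "\<exists>x'. \<forall>j. x' \<in> M j"
    proof (rule nest_nonempty)
      show "compact (M j)" for j
      proof -
        have "closed {x'\<in>Y. g x' = x}"
          using continuous_closed_preimage[OF gc compact_imp_closed[OF Y], of "{x}"]
          by (simp add: vimage_def Int_def)
        then show ?thesis unfolding M_def
          by (intro closed_Int_compact compact_window_image[OF Y gc gY] C)
      qed
      show "M j \<noteq> {}" for j
      proof -
        obtain w where w: "w \<in> Y" "(g^^Suc j) w = x"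
          "\<And>i. i\<le>2*j \<Longrightarrow> (g^^i) w \<in> C (t - int (Suc j) + int i)"
          using G unfolding Good_def by blast
        have a: "(g^^j) w \<in> Y" using gpow w(1) .
        have b: "g ((g^^j) w) = x" using w(2) by simp
        have c: "w \<in> {w \<in> Y. \<forall>i\<le>2 * j. (g ^^ i) w \<in> C (t - 1 - int j + int i)}"
            using w(1) w(3) by (auto simp: algebra_simps)
        have "(g^^j) w \<in> M j" unfolding M_def using a b c by blast
        then show ?thesis by blast
      qed
      show "M (Suc j) \<subseteq> M j" for j
      proof
        fix x' assume "x' \<in> M (Suc j)"
        then obtain w where w: "x' \<in> Y" "g x' = x" "w \<in> Y" "x' = (g^^Suc j) w"
          "\<And>i. i \<le> 2 * Suc j \<Longrightarrow> (g^^i) w \<in> C (t - 1 - int (Suc j) + int i)" unfolding M_def by blast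
        have "g w \<in> {w\<in>Y. \<forall>i\<le>2*j. (g^^i) w \<in> C (t - 1 - int j + int i)}"
        proof (safe)
          show "g w \<in> Y" using w(3) gY by blast
          fix i assume "i \<le> 2*j"
          then have "(g^^Suc i) w \<in> C (t - 1 - int (Suc j) + int (Suc i))" by (intro w(5)) auto
          moreover have eq: "t - 1 - int j + int i = t + (int i - int j) - 1" by simp
          ultimately show "(g^^i) (g w) \<in> C (t - 1 - int j + int i)" by (simp only: eq) (simp add: funpow_swap1)
        qed
        moreover have "x' = (g^^j) (g w)" using w(4) by (simp add: funpow_swap1)
        ultimately show "x' \<in> M j" unfolding M_def using w(1,2) by blast
      qed
    qed
    then obtain x' where x': "\<And>j. x' \<in> M j" by blast
    have "Good (t-1) x'"
    proof (rule fromwin)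
      show "x' \<in> Y" using x'[of 0] unfolding M_def by auto
      fix j show "\<exists>w\<in>Y. (g^^j) w = x' \<and> (\<forall>i\<le>2*j. (g^^i) w \<in> C (t - 1 - int j + int i))"
        using x'[of j] unfolding M_def by auto
    qed
    moreover have "g x' = x" using x'[of 0] unfolding M_def by auto
    ultimately show ?thesis by blast
  qed
  define b where "b = rec_nat x0 (\<lambda>n y. SOME x'. Good (- int n - 1) x' \<and> g x' = y)"
  have b0: "b 0 = x0" unfolding b_def by simp
  have bS: "b (Suc n) = (SOME x'. Good (- int n - 1) x' \<and> g x' = b n)" for n unfolding b_def by simp
  have bG: "Good (- int n) (b n) \<and> (n > 0 \<longrightarrow> g (b n) = b (n - 1))" for n
  proof (induction n)
    case 0 then show ?case using G0 b0 by simp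
  next
    case (Suc n)
    then have "Good (- int n) (b n)" by blast
    from P3[OF this] have "\<exists>x'. Good (- int n - 1) x' \<and> g x' = b n" by simp
    from someI_ex[OF this] have "Good (- int n - 1) (b (Suc n)) \<and> g (b (Suc n)) = b n"
      unfolding bS[symmetric] .
    moreover have "- int n - 1 = - int (Suc n)" by simp
    ultimately show ?case by (metis diff_Suc_1)
  qed
  have fG: "Good (int n) ((g^^n) x0)" for n
  proof (induction n)
    case 0 then show ?case using G0 by simp
  next
    case (Suc n)
    from P2[OF Suc] show ?case by (simp add: add.commute)
  qed
  define X where "X t = (if t \<ge> 0 then (g^^nat t) x0 else b (nat (-t)))" for t
  have XG: "Good t (X t)" for t
  proof (cases "t \<ge> 0")
    case True then show ?thesis using fG[of "nat t"] unfolding X_def by simp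
  next
    case False then show ?thesis using bG[of "nat (-t)"] unfolding X_def by simp
  qed
  have Xg: "g (X t) = X (t+1)" for t
  proof -
    consider "t \<ge> 0" | "t = -1" | "t < -1" by linarith
    then show ?thesis
    proof cases
      case 1
      then have "nat (t+1) = Suc (nat t)" by simp
      then show ?thesis using 1 unfolding X_def by simp
    next
      case 2
      then show ?thesis using bG[of 1] b0 unfolding X_def by simp
    next
      case 3
      then have "nat (-t) > 0" "nat (-t) - 1 = nat (-(t+1))" by simp_all
      then show ?thesis using bG[of "nat (-t)"] 3 unfolding X_def by simp
    qed
  qed
  show ?thesis using XG Xg P1 PY by blast
qed



locale TA_sys =
  fixes Y :: "'a::metric_space set" and g :: "'a \<Rightarrow> 'a" and \<beta> :: real
  assumes cY: "compact Y" and gc: "continuous_on Y g" and gY: "g ` Y = Y"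
    and cexp: "c_expansive_with Y g \<beta>" and shad: "shadowing Y g" and mix: "top_mixing Y g"
    and two: "\<exists>a\<in>Y. \<exists>b\<in>Y. a \<noteq> b"
begin

lemma gY': "g ` Y \<subseteq> Y" using gY by simp
lemma gin: "x \<in> Y \<Longrightarrow> g x \<in> Y" using gY by blast
lemma gpow_in: "x \<in> Y \<Longrightarrow> (g^^n) x \<in> Y" using funpow_cont[OF gc gY'] by blast
lemma gpow_cont: "continuous_on Y (g^^n)" using funpow_cont[OF gc gY'] by blast
lemma beta_pos: "\<beta> > 0" using cexp unfolding c_expansive_with_def by blast

lemma gpow_surj: "(g^^n) ` Y = Y"
proof (induction n)
  case (Suc n)
  have "(g^^Suc n) ` Y = g ` ((g^^n) ` Y)" by (simp add: image_comp)
  then show ?case using Suc gY by simp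
qed simp

lemma orbit_shift: "full_orbit Y g X \<Longrightarrow> X (t + int i) = (g^^i) (X t)"
  unfolding full_orbit_def
proof (induction i)
  case (Suc i)
  then have "X (t + int i + 1) = g ((g ^^ i) (X t))" by metis
  then show ?case by (simp add: ac_simps)
qed simp

lemma orbit_in: "full_orbit Y g X \<Longrightarrow> X t \<in> Y"
  unfolding full_orbit_def by blast

lemma orbit_shift_orbit: "full_orbit Y g X \<Longrightarrow> full_orbit Y g (\<lambda>i. X (i + s))"
  unfolding full_orbit_def by (simp add: algebra_simps)

lemma backward_limit_Y:
  assumes "\<And>t. closed (C t)"
    and "\<And>n. \<exists>w\<in>Y. \<forall>i\<le>2*n. (g^^i) w \<in> C (int i - int n)"
  shows "\<exists>X. full_orbit Y g X \<and> (\<forall>t. X t \<in> C t)"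
  using backward_limit[OF cY gc gY' assms] unfolding full_orbit_def by metis

lemma orbit_through:
  assumes "x \<in> Y" shows "\<exists>X. full_orbit Y g X \<and> X 0 = x"
proof -
  define C where "C t = (if t = 0 then {x} else Y)" for t :: int
  have "\<exists>X. full_orbit Y g X \<and> (\<forall>t. X t \<in> C t)"
  proof (rule backward_limit_Y)
    show "closed (C t)" for t unfolding C_def using compact_imp_closed[OF cY] by auto
    fix n
    obtain w where w: "w \<in> Y" "(g^^n) w = x" using gpow_surj[of n] assms by (metis imageE)
    have "(g^^i) w \<in> C (int i - int n)" for i
      using w gpow_in[OF w(1)] unfolding C_def by auto
    then show "\<exists>w\<in>Y. \<forall>i\<le>2*n. (g^^i) w \<in> C (int i - int n)" using w(1) by blast
  qed
  then show ?thesis unfolding C_def by (metis singletonD)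
qed

lemma FOS:
  assumes "\<gamma> > 0"
  shows "\<exists>\<delta>>0. \<forall>y::int\<Rightarrow>'a. (\<forall>t. y t \<in> Y) \<and> (\<forall>t. dist (g (y t)) (y (t+1)) < \<delta>) \<longrightarrow>
           (\<exists>X. full_orbit Y g X \<and> (\<forall>t. dist (X t) (y t) \<le> \<gamma>))"
proof -
  obtain \<delta> where d: "\<delta> > 0" "\<And>x::nat\<Rightarrow>'a. (\<forall>i. x i \<in> Y) \<and> (\<forall>i. dist (g (x i)) (x (Suc i)) < \<delta>) \<Longrightarrow>
        (\<exists>z\<in>Y. \<forall>i. dist ((g ^^ i) z) (x i) < \<gamma>)"
    using shad assms unfolding shadowing_def by meson
  have "\<exists>X. full_orbit Y g X \<and> (\<forall>t. dist (X t) (y t) \<le> \<gamma>)"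
    if y: "\<forall>t. y t \<in> Y" "\<forall>t. dist (g (y t)) (y (t+1)) < \<delta>" for y
  proof -
    have "\<exists>X. full_orbit Y g X \<and> (\<forall>t. X t \<in> cball (y t) \<gamma>)"
    proof (rule backward_limit_Y)
      show "closed (cball (y t) \<gamma>)" for t by simp
      fix n
      define x where "x i = y (int i - int n)" for i
      have "\<forall>i. x i \<in> Y" using y unfolding x_def by auto
      moreover have "\<forall>i. dist (g (x i)) (x (Suc i)) < \<delta>"
        using y(2) unfolding x_def by (metis add.commute add_diff_eq of_nat_Suc)
      ultimately obtain z where "z \<in> Y" "\<And>i. dist ((g ^^ i) z) (x i) < \<gamma>" using d(2) by blast
      then show "\<exists>w\<in>Y. \<forall>i\<le>2*n. (g^^i) w \<in> cball (y (int i - int n)) \<gamma>"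
        unfolding x_def mem_cball by (metis dist_commute less_imp_le)
    qed
    then show ?thesis by (auto simp: dist_commute)
  qed
  then show ?thesis using d(1) by blast
qed

lemma orbit_unique:
  assumes "full_orbit Y g X" "full_orbit Y g X'" "\<And>t. dist (X t) (X' t) \<le> \<beta>"
  shows "X t = X' t"
proof (rule ccontr)
  assume ne: "X t \<noteq> X' t"
  have "\<exists>n::int. dist (X (n + t)) (X' (n + t)) > \<beta>"
    using cexp orbit_shift_orbit[OF assms(1), of t] orbit_shift_orbit[OF assms(2), of t] ne
    unfolding c_expansive_with_def by auto
  then show False using assms(3) by (meson not_le)
qed

lemma pair_pow: "((\<lambda>p. (g (fst p), g (snd p)))^^i) (u,v) = ((g^^i) u, (g^^i) v)"
  by (induction i) auto

lemma unif_exp: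
  assumes "\<eta> > 0"
  shows "\<exists>L. \<forall>u\<in>Y. \<forall>v\<in>Y. (\<forall>i\<le>2*L. dist ((g^^i) u) ((g^^i) v) \<le> \<beta>) \<longrightarrow>
            dist ((g^^L) u) ((g^^L) v) < \<eta>"
proof (rule ccontr)
  assume H0: "\<not> ?thesis"
  define G where "G = (\<lambda>p::'a\<times>'a. (g (fst p), g (snd p)))"
  define C where "C t = (if t = 0 then {p::'a\<times>'a. dist (fst p) (snd p) \<le> \<beta> \<and> \<eta> \<le> dist (fst p) (snd p)}
                   else {p. dist (fst p) (snd p) \<le> \<beta>})" for t :: int
  have cYY: "compact (Y \<times> Y)" using cY by (simp add: compact_Times)
  have Gc: "continuous_on (Y \<times> Y) G" unfolding G_def
    by (intro continuous_on_Pair continuous_on_compose2[OF gc] continuous_on_fst continuous_on_snd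
        continuous_on_id) auto
  have GY: "G ` (Y \<times> Y) \<subseteq> Y \<times> Y" unfolding G_def using gY' by auto
  have "\<exists>X. \<forall>t. X t \<in> Y \<times> Y \<and> G (X t) = X (t+1) \<and> X t \<in> C t"
  proof (rule backward_limit[OF cYY Gc GY])
    show "closed (C t)" for t
    proof -
      have c: "continuous_on UNIV (\<lambda>p::'a\<times>'a. dist (fst p) (snd p))"
        by (intro continuous_intros)
      have "closed {p::'a\<times>'a. dist (fst p) (snd p) \<le> \<beta>}"
        by (rule closed_Collect_le) (intro continuous_intros)+
      moreover have "closed {p::'a\<times>'a. \<eta> \<le> dist (fst p) (snd p)}"
        by (rule closed_Collect_le) (intro continuous_intros)+
      ultimately show ?thesis unfolding C_def by (auto simp: Collect_conj_eq)
    qed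
    fix n
    from H0 obtain u v where uv: "u \<in> Y" "v \<in> Y" "\<And>i. i\<le>2*n \<Longrightarrow> dist ((g^^i) u) ((g^^i) v) \<le> \<beta>"
      "\<not> dist ((g^^n) u) ((g^^n) v) < \<eta>" by blast
    have "(G^^i) (u,v) \<in> C (int i - int n)" if "i \<le> 2*n" for i
      using uv(3)[OF that] uv(4) unfolding G_def pair_pow C_def by auto
    then show "\<exists>w\<in>Y\<times>Y. \<forall>i\<le>2*n. (G^^i) w \<in> C (int i - int n)" using uv(1,2) by blast
  qed
  then obtain X where X: "\<And>t. X t \<in> Y \<times> Y" "\<And>t. G (X t) = X (t+1)" "\<And>t. X t \<in> C t" by blast
  have o1: "full_orbit Y g (\<lambda>t. fst (X t))" using X(1,2) unfolding full_orbit_def G_def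
    by (metis fst_conv mem_Times_iff)
  have o2: "full_orbit Y g (\<lambda>t. snd (X t))" using X(1,2) unfolding full_orbit_def G_def
    by (metis snd_conv mem_Times_iff)
  have "dist (fst (X t)) (snd (X t)) \<le> \<beta>" for t using X(3)[of t] unfolding C_def by (auto split: if_splits)
  from orbit_unique[OF o1 o2 this, of 0] have "fst (X 0) = snd (X 0)" .
  moreover have "\<eta> \<le> dist (fst (X 0)) (snd (X 0))" using X(3)[of 0] unfolding C_def by auto
  ultimately show False using assms by simp
qed

end


context TA_sys begin

lemma finite_cover:
  assumes "r > 0" shows "\<exists>F. finite F \<and> F \<subseteq> Y \<and> Y \<subseteq> (\<Union>x\<in>F. ball x r)"
  using seq_compact_imp_totally_bounded[OF compact_imp_seq_compact[OF cY]] assms by blast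

lemma openin_ball: "openin (top_of_set Y) (Y \<inter> ball c r)"
  by (auto simp: openin_open)

lemma mix_bound:
  assumes "openin (top_of_set Y) U" "U \<noteq> {}" "openin (top_of_set Y) V" "V \<noteq> {}"
  shows "\<exists>B. \<forall>n\<ge>B. (g^^n) ` U \<inter> V \<noteq> {}"
proof -
  have "finite {n. (g^^n) ` U \<inter> V = {}}" using mix assms unfolding top_mixing_def by blast
  from iffD1[OF finite_nat_set_iff_bounded this] obtain B where B: "\<forall>n\<in>{n. (g^^n) ` U \<inter> V = {}}. n < B"
    by blast
  show ?thesis
  proof (intro exI allI impI)
    fix n assume "B \<le> n"
    then show "(g^^n) ` U \<inter> V \<noteq> {}" using B leD by blast
  qed
qed

lemma chain_lemma:
  assumes "\<delta> > 0"
  shows "\<exists>N\<ge>2. \<forall>a\<in>Y. \<forall>b\<in>Y. \<forall>n\<ge>N. \<exists>c::nat\<Rightarrow>'a. c 0 = a \<and> c n = b \<and> (\<forall>i. c i \<in> Y) \<and>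
            (\<forall>i<n. dist (g (c i)) (c (Suc i)) < \<delta>)"
proof -
  obtain \<rho> where \<rho>: "\<rho> > 0" "\<And>x x'. x\<in>Y \<Longrightarrow> x'\<in>Y \<Longrightarrow> dist x' x < \<rho> \<Longrightarrow> dist (g x') (g x) < \<delta>"
    using uniformly_continuous_onE[OF compact_uniformly_continuous[OF gc cY] assms] by blast
  define r where "r = min \<rho> \<delta> / 2"
  have r: "r > 0" "2*r \<le> \<rho>" "2*r \<le> \<delta>" unfolding r_def using \<rho> assms by auto
  obtain F where F: "finite F" "F \<subseteq> Y" "Y \<subseteq> (\<Union>x\<in>F. ball x r)" using finite_cover[OF r(1)] by blast
  have "\<forall>q \<in> F \<times> F. \<exists>B. \<forall>n\<ge>B. (g^^n) ` (Y \<inter> ball (fst q) r) \<inter> (Y \<inter> ball (snd q) r) \<noteq> {}"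
  proof
    fix q assume "q \<in> F \<times> F"
    then have "fst q \<in> Y \<inter> ball (fst q) r" "snd q \<in> Y \<inter> ball (snd q) r" using F(2) r(1) by auto
    then show "\<exists>B. \<forall>n\<ge>B. (g^^n) ` (Y \<inter> ball (fst q) r) \<inter> (Y \<inter> ball (snd q) r) \<noteq> {}"
      by (intro mix_bound openin_ball) auto
  qed
  then obtain B where B: "\<And>q n. q \<in> F \<times> F \<Longrightarrow> n \<ge> B q \<Longrightarrow>
      (g^^n) ` (Y \<inter> ball (fst q) r) \<inter> (Y \<inter> ball (snd q) r) \<noteq> {}" by metis
  define N where "N = 2 + (\<Sum>q\<in>F\<times>F. B q)"
  have NB: "B q \<le> N" if "q \<in> F \<times> F" for q
  proof -
    have "B q \<le> (\<Sum>q\<in>F\<times>F. B q)" using that F(1) by (intro member_le_sum) auto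
    then show ?thesis unfolding N_def by simp
  qed
  have "\<exists>c::nat\<Rightarrow>'a. c 0 = a \<and> c n = b \<and> (\<forall>i. c i \<in> Y) \<and> (\<forall>i<n. dist (g (c i)) (c (Suc i)) < \<delta>)"
    if ab: "a \<in> Y" "b \<in> Y" and n: "n \<ge> N" for a b n
  proof -
    obtain c1 where c1: "c1 \<in> F" "a \<in> ball c1 r" using F(3) ab(1) by blast
    obtain c2 where c2: "c2 \<in> F" "b \<in> ball c2 r" using F(3) ab(2) by blast
    have "n \<ge> B (c1,c2)" using NB[of "(c1,c2)"] c1 c2 n by auto
    have "(g^^n) ` (Y \<inter> ball c1 r) \<inter> (Y \<inter> ball c2 r) \<noteq> {}"
      using B[of "(c1,c2)" n] c1(1) c2(1) \<open>n \<ge> B (c1,c2)\<close> by simp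
    then obtain u where u: "u \<in> Y" "u \<in> ball c1 r" "(g^^n) u \<in> ball c2 r"
      by blast
    define c where "c i = (if i = 0 then a else if i = n then b else (g^^i) u)" for i
    have n2: "n \<ge> 2" using n unfolding N_def by simp
    have "dist (g (c i)) (c (Suc i)) < \<delta>" if i: "i < n" for i
    proof -
      consider "i = 0" | "0 < i \<and> Suc i < n" | "0 < i \<and> Suc i = n" using i n2 by linarith
      then show ?thesis
      proof cases
        case 1
        have "dist u a \<le> dist u c1 + dist c1 a" by (rule dist_triangle)
        moreover have "dist u c1 < r" "dist c1 a < r" using u(2) c1(2) by (auto simp: dist_commute)
        ultimately have "dist u a < \<rho>" using r(2) by linarith
        then have "dist (g u) (g a) < \<delta>" using \<rho>(2)[OF ab(1) u(1)] by blast
        then show ?thesis using 1 n2 unfolding c_def by (simp add: dist_commute)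
      next
        case 2 then show ?thesis unfolding c_def using assms by simp
      next
        case 3
        then have "c i = (g^^i) u" "c (Suc i) = b" unfolding c_def by auto
        moreover have "g ((g^^i) u) = (g^^n) u" using 3 by (metis funpow.simps(2) comp_apply)
        moreover have "dist ((g^^n) u) b < \<delta>"
        proof -
          have "dist ((g^^n) u) b \<le> dist ((g^^n) u) c2 + dist c2 b" by (rule dist_triangle)
          moreover have "dist ((g^^n) u) c2 < r" "dist c2 b < r" using u(3) c2(2) by (auto simp: dist_commute)
          ultimately show ?thesis using r(3) by linarith
        qed
        ultimately show ?thesis by simp
      qed
    qed
    moreover have "c i \<in> Y" for i unfolding c_def using ab gpow_in[OF u(1)] by auto
    moreover have "c 0 = a" "c n = b" unfolding c_def using n2 by auto
    ultimately show ?thesis by blast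
  qed
  moreover have "N \<ge> 2" unfolding N_def by simp
  ultimately show ?thesis by blast
qed

end


lemma int_mod_suc:
  fixes t n :: int assumes "n > 0"
  shows "(t+1) mod n = (if t mod n = n - 1 then 0 else t mod n + 1)"
proof -
  have "(t+1) mod n = (t mod n + 1) mod n" by (simp add: mod_add_left_eq)
  moreover have "0 \<le> t mod n" "t mod n < n" using assms by auto
  ultimately show ?thesis by (auto simp: mod_pos_pos_trivial)
qed

context TA_sys begin

lemma periodic_point: "\<exists>p k. p \<in> Y \<and> k \<ge> 1 \<and> (g^^k) p = p"
proof -
  have "\<beta>/2 > 0" using beta_pos by simp
  from FOS[OF this] obtain \<delta> where d: "\<delta> > 0" "\<forall>y::int\<Rightarrow>'a. (\<forall>t. y t \<in> Y) \<and> (\<forall>t. dist (g (y t)) (y (t+1)) < \<delta>) \<longrightarrow>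
           (\<exists>X. full_orbit Y g X \<and> (\<forall>t. dist (X t) (y t) \<le> \<beta>/2))"
    by (elim exE conjE)
  from chain_lemma[OF d(1)] obtain N where N: "N \<ge> 2" "\<forall>a\<in>Y. \<forall>b\<in>Y. \<forall>n\<ge>N. \<exists>c::nat\<Rightarrow>'a. c 0 = a \<and> c n = b \<and> (\<forall>i. c i \<in> Y) \<and>
            (\<forall>i<n. dist (g (c i)) (c (Suc i)) < \<delta>)"
    by (elim exE conjE)
  obtain w where w: "w \<in> Y" using two by blast
  obtain c where c: "c 0 = w" "c N = w" "\<And>i. c i \<in> Y" "\<And>i. i < N \<Longrightarrow> dist (g (c i)) (c (Suc i)) < \<delta>"
    using N(2)[rule_format, OF w w order.refl] by (elim exE conjE) blast
  define y where "y t = c (nat (t mod int N))" for t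
  have Npos: "int N > 0" using N(1) by simp
  have "dist (g (y t)) (y (t+1)) < \<delta>" for t
  proof (cases "t mod int N = int N - 1")
    case True
    have "nat (int N - 1) = N - 1" by simp
    then have "y (t+1) = c N" "y t = c (N - 1)" unfolding y_def using int_mod_suc[OF Npos, of t] c(1,2) True
      by auto
    moreover have "N - 1 < N" "Suc (N-1) = N" using N(1) by auto
    ultimately show ?thesis using c(4)[of "N-1"] by simp
  next
    case False
    have r: "0 \<le> t mod int N" "t mod int N < int N" using Npos by auto
    then have "y (t+1) = c (Suc (nat (t mod int N)))" "nat (t mod int N) < N"
      unfolding y_def using int_mod_suc[OF Npos, of t] False by (auto simp: nat_add_distrib)
    then show ?thesis using c(4) unfolding y_def by simp
  qed
  moreover have "y t \<in> Y" for t unfolding y_def using c(3) by simp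
  ultimately obtain X where X: "full_orbit Y g X" "\<And>t. dist (X t) (y t) \<le> \<beta>/2" using d(2) by meson
  have yp: "y (t + int N) = y t" for t unfolding y_def by simp
  have X2: "full_orbit Y g (\<lambda>t. X (t + int N))" by (rule orbit_shift_orbit[OF X(1)])
  have "dist (X t) (X (t + int N)) \<le> \<beta>" for t
  proof -
    have "dist (X t) (X (t + int N)) \<le> dist (X t) (y t) + dist (X (t + int N)) (y t)"
      by (rule dist_triangle2)
    also have "\<dots> \<le> \<beta>/2 + \<beta>/2" using X(2)[of t] X(2)[of "t + int N"] yp[of t] by simp
    finally show ?thesis by simp
  qed
  from orbit_unique[OF X(1) X2 this, of 0] have "X 0 = X (int N)" by simp
  also have "\<dots> = (g^^N) (X 0)" using orbit_shift[OF X(1), of 0 N] by simp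
  finally have "(g^^N) (X 0) = X 0" by simp
  moreover have "N \<ge> 1" using N(1) by simp
  ultimately show ?thesis using orbit_in[OF X(1)] by blast
qed

lemma Y_infinite: "infinite Y"
proof
  assume fin: "finite Y"
  obtain y1 y2 where y: "y1 \<in> Y" "y2 \<in> Y" "y1 \<noteq> y2" using two by blast
  have op: "openin (top_of_set Y) {y}" if "y \<in> Y" for y
  proof -
    have "closed (Y - {y})" using fin by (simp add: finite_imp_closed)
    then have "open (- (Y - {y}))" by (rule open_Compl)
    moreover have "{y} = Y \<inter> (- (Y - {y}))" using that by auto
    ultimately show ?thesis unfolding openin_open by blast
  qed
  obtain B1 where B1: "\<And>n. n \<ge> B1 \<Longrightarrow> (g^^n) ` {y1} \<inter> {y1} \<noteq> {}"
    using mix_bound[OF op[OF y(1)] _ op[OF y(1)]] by blast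
  obtain B2 where B2: "\<And>n. n \<ge> B2 \<Longrightarrow> (g^^n) ` {y1} \<inter> {y2} \<noteq> {}"
    using mix_bound[OF op[OF y(1)] _ op[OF y(2)]] by blast
  have "(g^^(B1+B2)) y1 = y1" using B1[of "B1+B2"] by auto
  moreover have "(g^^(B1+B2)) y1 = y2" using B2[of "B1+B2"] by auto
  ultimately show False using y(3) by simp
qed

end


locale constr = TA_sys +
  fixes p :: "'a::metric_space" and k :: nat and aa :: 'a and D \<gamma> \<delta> :: real and N :: nat
  assumes pY: "p \<in> Y" and k1: "k \<ge> 1" and pk: "(g^^k) p = p"
    and aY: "aa \<in> Y" and Dpos: "D > 0" and aD: "\<And>i. D \<le> dist aa ((g^^i) p)"
    and gpos: "\<gamma> > 0" and gb: "\<gamma> \<le> \<beta>/2" and gD: "4*\<gamma> \<le> D"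
    and dpos: "\<delta> > 0"
    and FOSd: "\<forall>y::int\<Rightarrow>'a. (\<forall>t. y t \<in> Y) \<and> (\<forall>t. dist (g (y t)) (y (t+1)) < \<delta>) \<longrightarrow>
               (\<exists>X. full_orbit Y g X \<and> (\<forall>t. dist (X t) (y t) \<le> \<gamma>))"
    and N2: "N \<ge> 2"
    and chainN: "\<forall>a\<in>Y. \<forall>b\<in>Y. \<forall>n\<ge>N. \<exists>c::nat\<Rightarrow>'a. c 0 = a \<and> c n = b \<and> (\<forall>i. c i \<in> Y) \<and>
            (\<forall>i<n. dist (g (c i)) (c (Suc i)) < \<delta>)"
begin

definition Lam :: int where "Lam = int (2*k*N)"
definition P :: "int \<Rightarrow> 'a" where "P t = (g^^nat (t mod int k)) p"
definition win :: "nat \<Rightarrow> int \<Rightarrow> bool" where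
  "win j t \<longleftrightarrow> Lam * (int j)^2 \<le> t \<and> t < Lam * (int j)^2 + Lam"
definition act :: "nat \<Rightarrow> (nat \<Rightarrow> bool) \<Rightarrow> nat \<Rightarrow> bool" where
  "act L \<omega> j \<longleftrightarrow> int L + int N < Lam * (int j)^2 \<and> \<omega> (fst (prod_decode j))"

lemma Lam_pos: "Lam \<ge> 1"
proof -
  have "1 \<le> 2*k*N" using k1 N2 by (metis le_trans mult_le_mono nat_mult_1 one_le_numeral mult.commute)
  then show ?thesis unfolding Lam_def by linarith
qed

lemma k_dvd_Lam: "int k dvd Lam" unfolding Lam_def by simp

lemma P_pow: "P t = (g^^nat (t mod int k)) p" by (simp add: P_def)

lemma P_in: "P t \<in> Y" unfolding P_def using gpow_in[OF pY] by simp

lemma P_dist: "D \<le> dist aa (P t)" unfolding P_def by (rule aD)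

lemma P_dvd: "int k dvd t \<Longrightarrow> P t = p" unfolding P_def by simp

lemma P_period: "int k dvd h \<Longrightarrow> P (t + h) = P t"
  unfolding P_def by (simp add: mod_add_right_eq[symmetric] dvd_imp_mod_0)

lemma P_orbit: "full_orbit Y g P"
  unfolding full_orbit_def
proof (intro allI conjI)
  fix t show "P t \<in> Y" by (rule P_in)
  have kp: "int k > 0" using k1 by simp
  show "g (P t) = P (t+1)"
  proof (cases "t mod int k = int k - 1")
    case True
    then have "(t+1) mod int k = 0" using int_mod_suc[OF kp] by simp
    moreover have "g (P t) = (g^^k) p"
    proof -
      have "nat (t mod int k) = k - 1" using True k1 by simp
      moreover have "k = Suc (k - 1)" using k1 by simp
      ultimately show ?thesis unfolding P_def by (metis funpow.simps(2) o_apply)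
    qed
    ultimately show ?thesis unfolding P_def using pk by simp
  next
    case False
    then have "(t+1) mod int k = t mod int k + 1" using int_mod_suc[OF kp] by simp
    moreover have "0 \<le> t mod int k" using kp by simp
    ultimately have "nat ((t+1) mod int k) = Suc (nat (t mod int k))" by simp
    then show ?thesis unfolding P_def by simp
  qed
qed

lemma win_unique:
  assumes "win j t" "win j' t" shows "j = j'"
proof (rule ccontr)
  assume "j \<noteq> j'"
  then consider "j < j'" | "j' < j" by linarith
  then show False
  proof cases
    case 1
    then have "int j + 1 \<le> int j'" by simp
    then have "(int j + 1)^2 \<le> (int j')^2" by (intro power_mono) auto
    then have "Lam * (int j + 1)^2 \<le> Lam * (int j')^2" using Lam_pos by (intro mult_left_mono) auto
    moreover have "Lam * (int j + 1)^2 \<ge> Lam * (int j)^2 + Lam" using Lam_pos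
      by (simp add: power2_eq_square algebra_simps)
    ultimately show False using assms unfolding win_def by linarith
  next
    case 2
    then have "int j' + 1 \<le> int j" by simp
    then have "(int j' + 1)^2 \<le> (int j)^2" by (intro power_mono) auto
    then have "Lam * (int j' + 1)^2 \<le> Lam * (int j)^2" using Lam_pos by (intro mult_left_mono) auto
    moreover have "Lam * (int j' + 1)^2 \<ge> Lam * (int j')^2 + Lam" using Lam_pos
      by (simp add: power2_eq_square algebra_simps)
    ultimately show False using assms unfolding win_def by linarith
  qed
qed

end


context constr begin

definition LamN :: nat where "LamN = 2*k*N"
lemma Lam_LamN: "Lam = int LamN" unfolding Lam_def LamN_def by simp
lemma LamN_ge: "LamN \<ge> N + N"
proof -
  have "2*N \<le> (2*k)*N" by (rule mult_right_mono) (use k1 in simp_all)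
  moreover have "N + N = 2*N" by simp
  ultimately show ?thesis unfolding LamN_def by linarith
qed

lemma exc_ex: "\<exists>e. e 0 = p \<and> e N = aa \<and> e LamN = p \<and> (\<forall>i. e i \<in> Y) \<and>
   (\<forall>i<LamN. dist (g (e i)) (e (Suc i)) < \<delta>)"
proof -
  obtain c1 where c1: "c1 0 = p" "c1 N = aa" "\<forall>i. c1 i \<in> Y" "\<forall>i<N. dist (g (c1 i)) (c1 (Suc i)) < \<delta>"
    using chainN pY aY by blast
  have "LamN - N \<ge> N" using LamN_ge by simp
  then obtain c2 where c2: "c2 0 = aa" "c2 (LamN - N) = p" "\<forall>i. c2 i \<in> Y"
      "\<forall>i<LamN - N. dist (g (c2 i)) (c2 (Suc i)) < \<delta>"
    using chainN pY aY by blast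
  define e where "e i = (if i \<le> N then c1 i else c2 (i - N))" for i
  have "dist (g (e i)) (e (Suc i)) < \<delta>" if "i < LamN" for i
  proof (cases "i < N")
    case True then show ?thesis unfolding e_def using c1(4) by simp
  next
    case False
    then have s: "Suc i - N = Suc (i - N)" "i - N < LamN - N" using that by auto
    show ?thesis
    proof (cases "i = N")
      case True
      then have "e i = c2 0" "e (Suc i) = c2 (Suc 0)" unfolding e_def using c1(2) c2(1) by auto
      then show ?thesis using c2(4) s(2) True by simp
    next
      case False
      then have "e i = c2 (i - N)" "e (Suc i) = c2 (Suc (i - N))" unfolding e_def using \<open>\<not> i < N\<close> s(1) by auto
      then show ?thesis using c2(4) s(2) by simp
    qed
  qed
  moreover have "e 0 = p" "e N = aa" "e LamN = p" "\<forall>i. e i \<in> Y"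
    unfolding e_def using c1 c2 LamN_ge N2 by auto
  ultimately show ?thesis by blast
qed

definition exc :: "nat \<Rightarrow> 'a" where
  "exc = (SOME e. e 0 = p \<and> e N = aa \<and> e LamN = p \<and> (\<forall>i. e i \<in> Y) \<and>
   (\<forall>i<LamN. dist (g (e i)) (e (Suc i)) < \<delta>))"

lemma exc: "exc 0 = p" "exc N = aa" "exc LamN = p" "exc i \<in> Y"
   "i < LamN \<Longrightarrow> dist (g (exc i)) (exc (Suc i)) < \<delta>"
  using someI_ex[OF exc_ex] unfolding exc_def[symmetric] by auto

definition ps :: "(int \<Rightarrow> 'a) \<Rightarrow> nat \<Rightarrow> (nat \<Rightarrow> 'a) \<Rightarrow> (nat \<Rightarrow> bool) \<Rightarrow> int \<Rightarrow> 'a" where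
  "ps Q L cf \<omega> t = (if t \<le> int L then Q t else if t \<le> int L + int N then cf (nat (t - int L))
     else if (\<exists>j. act L \<omega> j \<and> win j t) then exc (nat (t - Lam * (int (SOME j. act L \<omega> j \<and> win j t))^2))
     else P t)"

definition valid :: "(int \<Rightarrow> 'a) \<Rightarrow> nat \<Rightarrow> (nat \<Rightarrow> 'a) \<Rightarrow> bool" where
  "valid Q L cf \<longleftrightarrow> full_orbit Y g Q \<and> cf 0 = Q (int L) \<and> cf N = P (int L + int N) \<and> (\<forall>i. cf i \<in> Y) \<and>
     (\<forall>i<N. dist (g (cf i)) (cf (Suc i)) < \<delta>)"

lemma act_gt: "act L \<omega> j \<Longrightarrow> int L + int N < Lam * (int j)^2" unfolding act_def by blast

lemma ps_Q: "t \<le> int L \<Longrightarrow> ps Q L cf \<omega> t = Q t" unfolding ps_def by simp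

lemma ps_cf: "valid Q L cf \<Longrightarrow> int L \<le> t \<Longrightarrow> t \<le> int L + int N \<Longrightarrow> ps Q L cf \<omega> t = cf (nat (t - int L))"
  unfolding ps_def valid_def by auto

lemma ps_win: "act L \<omega> j \<Longrightarrow> win j t \<Longrightarrow> ps Q L cf \<omega> t = exc (nat (t - Lam * (int j)^2))"
proof -
  assume A: "act L \<omega> j" "win j t"
  have "(SOME j. act L \<omega> j \<and> win j t) = j"
    using A win_unique by (intro some_equality) auto
  moreover have "t > int L + int N" using A act_gt unfolding win_def by fastforce
  ultimately show ?thesis unfolding ps_def using A by auto
qed

lemma ps_P: "t > int L + int N \<Longrightarrow> \<not> (\<exists>j. act L \<omega> j \<and> win j t) \<Longrightarrow> ps Q L cf \<omega> t = P t"
  unfolding ps_def by auto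

lemma Lam_sq_dvd: "int k dvd Lam * (int j)^2" using k_dvd_Lam by simp

lemma win_next_gap:
  assumes "j \<ge> 1" "win j' (Lam * (int j)^2 + Lam)" shows False
proof -
  have "j' \<noteq> j"
  proof
    assume "j' = j" then show False using assms(2) unfolding win_def by simp
  qed
  then consider "j' < j" | "j < j'" by linarith
  then show False
  proof cases
    case 1
    then have "int j' + 1 \<le> int j" by simp
    then have "(int j' + 1)^2 \<le> (int j)^2" by (intro power_mono) auto
    then have "Lam * (int j' + 1)^2 \<le> Lam * (int j)^2" using Lam_pos by (intro mult_left_mono) auto
    moreover have "Lam * (int j' + 1)^2 \<ge> Lam * (int j')^2 + Lam" using Lam_pos
      by (simp add: power2_eq_square algebra_simps)
    ultimately show False using assms(2) unfolding win_def by linarith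
  next
    case 2
    then have "int j + 1 \<le> int j'" by simp
    then have "(int j + 1)^2 \<le> (int j')^2" by (intro power_mono) auto
    then have "Lam * (int j + 1)^2 \<le> Lam * (int j')^2" using Lam_pos by (intro mult_left_mono) auto
    moreover have "Lam * (int j + 1)^2 > Lam * (int j)^2 + Lam" using Lam_pos assms(1)
      by (simp add: power2_eq_square algebra_simps)
    ultimately show False using assms(2) unfolding win_def by linarith
  qed
qed

lemma act_ge1: "act L \<omega> j \<Longrightarrow> j \<ge> 1"
  using act_gt[of L \<omega> j] by (cases j) auto

lemma ps_chain:
  assumes V: "valid Q L cf"
  shows "ps Q L cf \<omega> t \<in> Y \<and> dist (g (ps Q L cf \<omega> t)) (ps Q L cf \<omega> (t+1)) < \<delta>"
proof -
  let ?y = "ps Q L cf \<omega>"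
  have QO: "full_orbit Y g Q" and cfY: "\<And>i. cf i \<in> Y" and cfc: "\<And>i. i < N \<Longrightarrow> dist (g (cf i)) (cf (Suc i)) < \<delta>"
    and cfN: "cf N = P (int L + int N)" using V unfolding valid_def by auto
  have yY: "?y s \<in> Y" for s
    unfolding ps_def using orbit_in[OF QO] cfY exc(4) P_in by auto
  have stepP: "?y (t+1) = P (t+1)" if t0: "t \<ge> int L + int N" and nw: "\<not> (\<exists>j. act L \<omega> j \<and> win j t)" for t
  proof (cases "\<exists>j. act L \<omega> j \<and> win j (t+1)")
    case True
    then obtain j where j: "act L \<omega> j" "win j (t+1)" by blast
    have "\<not> win j t"
    proof
      assume "win j t"
      then show False using nw j(1) by blast
    qed
    then have "t + 1 = Lam * (int j)^2" using j(2) unfolding win_def by linarith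
    then have "?y (t+1) = p" using ps_win[OF j] exc(1) by simp
    also have "p = P (t+1)" using P_dvd[OF Lam_sq_dvd[of j]] \<open>t + 1 = _\<close> by simp
    finally show ?thesis .
  next
    case False
    show ?thesis by (rule ps_P) (use t0 False in auto)
  qed
  have PO: "g (P s) = P (s+1)" for s using P_orbit unfolding full_orbit_def by blast
  have o: "t < int L \<or> (int L \<le> t \<and> t < int L + int N) \<or> t = int L + int N \<or> t > int L + int N" by linarith
  consider "t < int L" | "int L \<le> t \<and> t < int L + int N" | "t = int L + int N"
    | "t > int L + int N \<and> (\<exists>j. act L \<omega> j \<and> win j t)"
    | "t > int L + int N \<and> \<not> (\<exists>j. act L \<omega> j \<and> win j t)"
    using o by blast
  then have "dist (g (?y t)) (?y (t+1)) < \<delta>"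
  proof cases
    case 1
    then have "?y t = Q t" "?y (t+1) = Q (t+1)" using ps_Q by auto
    then show ?thesis using QO dpos unfolding full_orbit_def by simp
  next
    case 2
    then have "?y t = cf (nat (t - int L))" "?y (t+1) = cf (Suc (nat (t - int L)))"
      using ps_cf[OF V] by (auto simp: nat_add_distrib[symmetric] intro!: arg_cong[where f=cf])
    moreover have "nat (t - int L) < N" using 2 by (subst nat_less_iff) auto
    ultimately show ?thesis using cfc by simp
  next
    case 3
    then have "?y t = P t" using ps_cf[OF V, of t] cfN by simp
    moreover have "\<not> (\<exists>j. act L \<omega> j \<and> win j t)" using 3 act_gt unfolding win_def by fastforce
    then have "?y (t+1) = P (t+1)" using stepP 3 by simp
    ultimately show ?thesis using PO dpos by simp
  next
    case 4
    then obtain j where j: "act L \<omega> j" "win j t" by blast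
    define i where "i = nat (t - Lam * (int j)^2)"
    have yt: "?y t = exc i" using ps_win[OF j] unfolding i_def .
    have iL: "i < LamN" using j(2) unfolding win_def i_def Lam_LamN by (subst nat_less_iff) auto
    show ?thesis
    proof (cases "win j (t+1)")
      case True
      have "nat (t + 1 - Lam * (int j)^2) = Suc i" using j(2) unfolding i_def win_def
        by (subst Suc_nat_eq_nat_zadd1) (auto simp: algebra_simps)
      then have "?y (t+1) = exc (Suc i)" using ps_win[OF j(1) True] by simp
      then show ?thesis using yt exc(5)[OF iL] by simp
    next
      case False
      then have t1: "t + 1 = Lam * (int j)^2 + Lam" using j(2) unfolding win_def by linarith
      then have "t - Lam * (int j)^2 = int LamN - 1" unfolding Lam_LamN by simp
      then have iS: "Suc i = LamN" unfolding i_def using Lam_pos Lam_LamN by simp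
      have "\<not> (\<exists>j'. act L \<omega> j' \<and> win j' (t+1))"
        using win_next_gap[OF act_ge1[OF j(1)]] t1 by metis
      then have "?y (t+1) = P (t+1)" using ps_P[of L "t+1"] 4 by simp
      also have "\<dots> = p" using t1 Lam_sq_dvd[of j] k_dvd_Lam by (intro P_dvd) simp
      finally have "?y (t+1) = exc (Suc i)" using iS exc(3) by simp
      then show ?thesis using yt exc(5)[OF iL] by simp
    qed
  next
    case 5
    then have "?y t = P t" using ps_P by simp
    moreover have "?y (t+1) = P (t+1)" using stepP 5 by simp
    ultimately show ?thesis using PO dpos by simp
  qed
  then show ?thesis using yY by blast
qed

end


lemma telescope:
  fixes f :: "nat \<Rightarrow> 'b::metric_space"
  assumes "\<And>q. q < n \<Longrightarrow> dist (f q) (f (Suc q)) \<le> c"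
  shows "dist (f 0) (f n) \<le> real n * c"
  using assms
proof (induction n)
  case 0 then show ?case by simp
next
  case (Suc n)
  have "dist (f 0) (f (Suc n)) \<le> dist (f 0) (f n) + dist (f n) (f (Suc n))" by (rule dist_triangle)
  also have "\<dots> \<le> real n * c + c" using Suc by (intro add_mono) auto
  finally show ?case by (simp add: algebra_simps)
qed

lemma sq_ge: "(J::int) \<ge> 0 \<Longrightarrow> J \<le> J^2"
  by (cases "J = 0") (auto simp: power2_eq_square)

context constr begin

definition trace :: "(int \<Rightarrow> 'a) \<Rightarrow> nat \<Rightarrow> (nat \<Rightarrow> 'a) \<Rightarrow> (nat \<Rightarrow> bool) \<Rightarrow> int \<Rightarrow> 'a" where
  "trace Q L cf \<omega> = (SOME X. full_orbit Y g X \<and> (\<forall>t. dist (X t) (ps Q L cf \<omega> t) \<le> \<gamma>))"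

lemma trace:
  assumes "valid Q L cf"
  shows "full_orbit Y g (trace Q L cf \<omega>)" "dist (trace Q L cf \<omega> t) (ps Q L cf \<omega> t) \<le> \<gamma>"
proof -
  have "\<exists>X. full_orbit Y g X \<and> (\<forall>t. dist (X t) (ps Q L cf \<omega> t) \<le> \<gamma>)"
    using FOSd ps_chain[OF assms] by blast
  from someI_ex[OF this] show "full_orbit Y g (trace Q L cf \<omega>)" "dist (trace Q L cf \<omega> t) (ps Q L cf \<omega> t) \<le> \<gamma>"
    unfolding trace_def by auto
qed

definition eps :: real where "eps = D / (4 * (real N + 1))"

lemma eps_pos: "eps > 0" unfolding eps_def using Dpos by simp

lemma eps_le: "eps \<le> D/4"
proof -
  have "D / (4 * (real N + 1)) \<le> D / 4" using Dpos by (intro divide_left_mono) auto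
  then show ?thesis unfolding eps_def by simp
qed

lemma trace_a:
  assumes "valid Q L cf" "act L \<omega> j"
  shows "dist (trace Q L cf \<omega> (Lam * (int j)^2 + int N)) aa \<le> \<gamma>"
proof -
  have "int N < Lam" using LamN_ge N2 unfolding Lam_LamN by simp
  then have "win j (Lam * (int j)^2 + int N)" unfolding win_def by simp
  then have "ps Q L cf \<omega> (Lam * (int j)^2 + int N) = aa" using ps_win[OF assms(2)] exc(2) by simp
  then show ?thesis using trace(2)[OF assms(1)] by metis
qed

lemma trace_P:
  assumes "valid Q L cf" "t > int L + int N" "\<not> (\<exists>j. act L \<omega> j \<and> win j t)"
  shows "dist (trace Q L cf \<omega> t) (P t) \<le> \<gamma>"
  using trace(2)[OF assms(1)] ps_P[OF assms(2,3)] by metis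

lemma sep_base:
  assumes "dist x aa \<le> \<gamma>" "dist y (P s) \<le> \<gamma>"
  shows "dist x y \<ge> D/2"
proof -
  have "D \<le> dist aa (P s)" by (rule P_dist)
  also have "\<dots> \<le> dist aa x + dist x (P s)" by (rule dist_triangle)
  also have "dist x (P s) \<le> dist x y + dist y (P s)" by (rule dist_triangle)
  finally show ?thesis using assms gD by (simp add: dist_commute)
qed

lemma region:
  assumes "Lam * (int j - 1)^2 + Lam \<le> t" "t < Lam * (int j + 1)^2" "win j' t"
  shows "j' = j"
proof (rule ccontr)
  assume "j' \<noteq> j"
  then consider "j' < j" | "j < j'" by linarith
  then show False
  proof cases
    case 1
    then have "int j' \<le> int j - 1" by simp
    then have "(int j')^2 \<le> (int j - 1)^2" by (intro power_mono) auto
    then have "Lam * (int j')^2 \<le> Lam * (int j - 1)^2" using Lam_pos by (intro mult_left_mono) auto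
    then show False using assms unfolding win_def by linarith
  next
    case 2
    then have "int j + 1 \<le> int j'" by simp
    then have "(int j + 1)^2 \<le> (int j')^2" by (intro power_mono) auto
    then have "Lam * (int j + 1)^2 \<le> Lam * (int j')^2" using Lam_pos by (intro mult_left_mono) auto
    then show False using assms unfolding win_def by linarith
  qed
qed

lemma big_facts:
  fixes J :: int assumes "J \<ge> 0"
  shows "Lam * J^2 \<ge> J" "Lam * (J + 1)^2 = Lam * J^2 + 2*(J*Lam) + Lam"
    "Lam * (J - 1)^2 + Lam = Lam * J^2 - 2*(J*Lam) + 2*Lam" "J*Lam \<ge> J"
    "J \<ge> 1 \<Longrightarrow> J*Lam \<ge> Lam + J - 1"
proof -
  show "J \<ge> 1 \<Longrightarrow> J*Lam \<ge> Lam + J - 1"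
  proof -
    assume "J \<ge> 1"
    then have "(J - 1) * (Lam - 1) \<ge> 0" using Lam_pos by simp
    then show ?thesis by (simp add: algebra_simps)
  qed
  have "J^2 \<ge> J" using sq_ge assms by blast
  moreover have "Lam * J^2 \<ge> J^2" using Lam_pos by (simp add: mult_le_cancel_right1)
  ultimately show "Lam * J^2 \<ge> J" by linarith
  show "Lam * (J + 1)^2 = Lam * J^2 + 2*(J*Lam) + Lam" "Lam * (J - 1)^2 + Lam = Lam * J^2 - 2*(J*Lam) + 2*Lam"
    by (simp_all add: power2_eq_square algebra_simps)
  show "J*Lam \<ge> J" using Lam_pos assms by (simp add: mult_le_cancel_left1)
qed

lemma sep_diff:
  assumes V: "valid Q L cf" and V': "valid Q' L' cf'" and w: "\<omega> i0" "\<not> \<omega>' i0"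
  shows "\<exists>t\<ge>M. dist (trace Q L cf \<omega> t) (trace Q' L' cf' \<omega>' (t + h)) > eps"
proof -
  define r where "r = nat M + nat \<bar>h\<bar> + L + L' + N + 2"
  define j where "j = prod_encode (i0, r)"
  have jr: "j \<ge> r" unfolding j_def by (rule le_prod_encode_2)
  define J where "J = int j"
  have J: "J \<ge> M" "J \<ge> \<bar>h\<bar> + int L + int L' + int N + 2" "J \<ge> 0" using jr unfolding r_def J_def by auto
  note bf = big_facts[OF J(3)]
  have fst: "fst (prod_decode j) = i0" unfolding j_def by simp
  have act: "act L \<omega> j" unfolding act_def fst J_def[symmetric] using w(1) bf(1) J(2) by auto
  have nact: "\<not> act L' \<omega>' j" unfolding act_def fst using w(2) by auto
  define t where "t = Lam * J^2 + int N"
  define s where "s = t + h"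
  have d1: "dist (trace Q L cf \<omega> t) aa \<le> \<gamma>" using trace_a[OF V act] unfolding t_def J_def .
  have J1: "J \<ge> 1" using J(2) by simp
  have s1: "Lam * (J - 1)^2 + Lam \<le> s" "s < Lam * (J + 1)^2"
    unfolding s_def t_def bf(2) bf(3) using bf(4) bf(5)[OF J1] J(2) Lam_pos by linarith+
  have nw: "\<not> (\<exists>j'. act L' \<omega>' j' \<and> win j' s)"
  proof
    assume "\<exists>j'. act L' \<omega>' j' \<and> win j' s"
    then obtain j' where "act L' \<omega>' j'" "win j' s" by blast
    moreover have "j' = j" using region[of j s j'] s1 \<open>win j' s\<close> unfolding J_def by simp
    ultimately show False using nact by simp
  qed
  have "s > int L' + int N" unfolding s_def t_def using bf(1) J(2) by linarith
  then have d2: "dist (trace Q' L' cf' \<omega>' s) (P s) \<le> \<gamma>" using trace_P[OF V' _ nw] by blast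
  have "dist (trace Q L cf \<omega> t) (trace Q' L' cf' \<omega>' s) \<ge> D/2" by (rule sep_base[OF d1 d2])
  moreover have "eps < D/2" using eps_le Dpos by linarith
  moreover have "t \<ge> M" unfolding t_def using bf(1) J(1) by linarith
  ultimately show ?thesis unfolding s_def by force
qed

lemma sep_same_pos:
  assumes V: "valid Q L cf" and w: "\<omega> 0" and h: "h > 0"
  shows "\<exists>t\<ge>M. dist (trace Q L cf \<omega> t) (trace Q L cf \<omega> (t + h)) > eps"
proof -
  let ?X = "trace Q L cf \<omega>"
  define r where "r = nat M + nat h * (N+1) + L + N + 2"
  define j where "j = prod_encode (0, r)"
  have jr: "j \<ge> r" unfolding j_def by (rule le_prod_encode_2)
  define J where "J = int j"
  have a: "int (nat M) \<ge> M" by simp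
  have b: "int (nat h * (N+1)) = (int N + 1) * h" using h by (simp add: algebra_simps)
  have "int j \<ge> int r" using jr by simp
  then have J: "J \<ge> int (nat M) + (int N + 1) * h + int L + int N + 2" "J \<ge> 0" using b unfolding r_def J_def
    by (simp_all add: of_nat_add)
  note bf = big_facts[OF J(2)]
  have fst: "fst (prod_decode j) = 0" unfolding j_def by simp
  have hp: "(int N + 1) * h \<ge> int N + 1" using h by (simp add: mult_le_cancel_left1)
  have "int L + int N < Lam * J^2" using bf(1) J(1) hp of_nat_0_le_iff[of "nat M"] by linarith
  then have act: "act L \<omega> j" unfolding act_def fst J_def[symmetric] using w by auto
  define e where "e = Lam * J^2 + int N"
  define t0 where "t0 = e - (int N + 1) * h"
  have d1: "dist (?X e) aa \<le> \<gamma>" using trace_a[OF V act] unfolding e_def J_def .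
  have J1: "J \<ge> 1" using J(1) hp of_nat_0_le_iff[of "nat M"] by linarith
  have s1: "Lam * (J - 1)^2 + Lam \<le> t0" "t0 < Lam * (J + 1)^2" "t0 < Lam * J^2"
    unfolding t0_def e_def bf(2) bf(3) using bf(4) bf(5)[OF J1] J(1) Lam_pos hp by linarith+
  have nw: "\<not> (\<exists>j'. act L \<omega> j' \<and> win j' t0)"
  proof
    assume "\<exists>j'. act L \<omega> j' \<and> win j' t0"
    then obtain j' where "win j' t0" by blast
    moreover have "j' = j" using region[of j t0 j'] s1 \<open>win j' t0\<close> unfolding J_def by simp
    ultimately show False using s1(3) unfolding win_def J_def by simp
  qed
  have "t0 > int L + int N" unfolding t0_def e_def using bf(1) J(1) by linarith
  then have d2: "dist (?X t0) (P t0) \<le> \<gamma>" using trace_P[OF V _ nw] by blast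
  have big: "dist (?X e) (?X t0) \<ge> D/2" by (rule sep_base[OF d1 d2])
  define f where "f q = ?X (t0 + int q * h)" for q
  have f0: "f 0 = ?X t0" and fN: "f (N+1) = ?X e" unfolding f_def t0_def by (auto simp: algebra_simps)
  have "\<exists>q<N+1. dist (f q) (f (Suc q)) > eps"
  proof (rule ccontr)
    assume "\<not> ?thesis"
    then have "dist (f 0) (f (N+1)) \<le> real (N+1) * eps" by (intro telescope) (meson not_less)
    also have "\<dots> = D/4" unfolding eps_def by (simp add: field_simps)
    finally show False using big f0 fN Dpos by (simp add: dist_commute)
  qed
  then obtain q where q: "dist (f q) (f (Suc q)) > eps" by blast
  have "t0 \<ge> M" unfolding t0_def e_def using bf(1) J(1) a by linarith
  moreover have "int q * h \<ge> 0" using h by simp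
  ultimately have "t0 + int q * h \<ge> M" by linarith
  moreover have "f (Suc q) = ?X (t0 + int q * h + h)" unfolding f_def by (simp add: algebra_simps)
  ultimately show ?thesis using q unfolding f_def by force
qed

lemma sep_same:
  assumes V: "valid Q L cf" and w: "\<omega> 0" and h: "h \<noteq> 0"
  shows "\<exists>t\<ge>M. dist (trace Q L cf \<omega> t) (trace Q L cf \<omega> (t + h)) > eps"
proof (cases "h > 0")
  case True then show ?thesis using sep_same_pos[of Q L cf \<omega>, OF V w] by blast
next
  case False
  then have "-h > 0" using h by simp
  from sep_same_pos[of Q L cf \<omega>, OF V w this, of "M + h"] obtain t' where
    "t' \<ge> M + h" "dist (trace Q L cf \<omega> t') (trace Q L cf \<omega> (t' + - h)) > eps" by blast
  then show ?thesis by (intro exI[of _ "t' - h"]) (auto simp: dist_commute)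
qed

end


context TA_sys begin

definition UE :: "nat \<Rightarrow> real \<Rightarrow> bool" where
  "UE L0 \<eta> \<longleftrightarrow> (\<forall>u\<in>Y. \<forall>v\<in>Y. (\<forall>i\<le>2*L0. dist ((g^^i) u) ((g^^i) v) \<le> \<beta>) \<longrightarrow>
            dist ((g^^L0) u) ((g^^L0) v) < \<eta>)"

lemma UE_ex: "\<eta> > 0 \<Longrightarrow> \<exists>L0. UE L0 \<eta>" unfolding UE_def using unif_exp by blast

lemma window_close:
  assumes X: "full_orbit Y g X" and X': "full_orbit Y g X'" and U: "UE L0 \<eta>"
    and c: "\<And>s. \<bar>s - t\<bar> \<le> int L0 \<Longrightarrow> dist (X s) (X' s) \<le> \<beta>"
  shows "dist (X t) (X' t) < \<eta>"
proof -
  let ?u = "X (t - int L0)" and ?v = "X' (t - int L0)"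
  have gi: "(g^^i) ?u = X (t - int L0 + int i)" "(g^^i) ?v = X' (t - int L0 + int i)" for i
    using orbit_shift[OF X] orbit_shift[OF X'] by auto
  have "\<forall>i\<le>2*L0. dist ((g^^i) ?u) ((g^^i) ?v) \<le> \<beta>"
  proof (intro allI impI)
    fix i assume "i \<le> 2*L0"
    then have "\<bar>t - int L0 + int i - t\<bar> \<le> int L0" by auto
    then show "dist ((g^^i) ?u) ((g^^i) ?v) \<le> \<beta>" unfolding gi by (rule c)
  qed
  then have "dist ((g^^L0) ?u) ((g^^L0) ?v) < \<eta>" using U orbit_in[OF X] orbit_in[OF X'] unfolding UE_def by blast
  then show ?thesis unfolding gi by simp
qed

end

context constr begin

lemma gam_beta: "2*\<gamma> \<le> \<beta>" using gb by simp

lemma near_P: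
  assumes V: "valid Q L cf" and U: "UE L0 \<eta>"
    and c: "\<And>s. \<bar>s - t\<bar> \<le> int L0 \<Longrightarrow> s > int L + int N \<and> \<not> (\<exists>j. win j s)"
  shows "dist (trace Q L cf \<omega> t) (P t) < \<eta>"
proof (rule window_close[OF trace(1)[OF V] P_orbit U])
  fix s assume "\<bar>s - t\<bar> \<le> int L0"
  then have "s > int L + int N" "\<not> (\<exists>j. act L \<omega> j \<and> win j s)" using c by auto
  then have "dist (trace Q L cf \<omega> s) (P s) \<le> \<gamma>" by (rule trace_P[OF V])
  then show "dist (trace Q L cf \<omega> s) (P s) \<le> \<beta>" using gam_beta gpos by linarith
qed

lemma dens:
  assumes V: "valid Q L cf" and U: "UE L \<eta>"
  shows "dist (trace Q L cf \<omega> 0) (Q 0) < \<eta>"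
proof (rule window_close[OF trace(1)[OF V] _ U])
  show "full_orbit Y g Q" using V unfolding valid_def by blast
  fix s :: int assume "\<bar>s - 0\<bar> \<le> int L"
  then have "ps Q L cf \<omega> s = Q s" by (intro ps_Q) auto
  then have "dist (trace Q L cf \<omega> s) (Q s) \<le> \<gamma>" using trace(2)[OF V] by metis
  then show "dist (trace Q L cf \<omega> s) (Q s) \<le> \<beta>" using gam_beta gpos by linarith
qed

lemma ps_agree:
  assumes V: "valid Q L cf" and agree: "\<And>i. i < K \<Longrightarrow> \<omega> i = \<omega>' i" and s: "s < Lam * (int K)^2"
  shows "ps Q L cf \<omega> s = ps Q L cf \<omega>' s"
proof -
  have "act L \<omega> j \<and> win j s \<longleftrightarrow> act L \<omega>' j \<and> win j s" for j
  proof (cases "win j s")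
    case True
    have "j < K"
    proof (rule ccontr)
      assume "\<not> j < K"
      then have "(int K)^2 \<le> (int j)^2" by (intro power_mono) auto
      then have "Lam * (int K)^2 \<le> Lam * (int j)^2" using Lam_pos by (intro mult_left_mono) auto
      then show False using True s unfolding win_def by linarith
    qed
    moreover have "fst (prod_decode j) \<le> j"
      by (metis le_prod_encode_1 prod_decode_inverse prod.collapse)
    ultimately have "\<omega> (fst (prod_decode j)) = \<omega>' (fst (prod_decode j))" using agree by simp
    then show ?thesis unfolding act_def by simp
  qed simp
  then have eq: "(\<lambda>j. act L \<omega> j \<and> win j s) = (\<lambda>j. act L \<omega>' j \<and> win j s)" by blast
  show ?thesis unfolding ps_def eq ..
qed

lemma cont_code:
  assumes V: "valid Q L cf" and eta: "\<eta> > 0"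
  shows "\<exists>K. \<forall>\<omega> \<omega>'. (\<forall>i<K. \<omega> i = \<omega>' i) \<longrightarrow> dist (trace Q L cf \<omega> 0) (trace Q L cf \<omega>' 0) < \<eta>"
proof -
  obtain L0 where U: "UE L0 \<eta>" using UE_ex[OF eta] by blast
  define K where "K = L0 + 1"
  have "dist (trace Q L cf \<omega> 0) (trace Q L cf \<omega>' 0) < \<eta>" if ag: "\<forall>i<K. \<omega> i = \<omega>' i" for \<omega> \<omega>'
  proof (rule window_close[OF trace(1)[OF V] trace(1)[OF V] U])
    fix s :: int assume "\<bar>s - 0\<bar> \<le> int L0"
    moreover have "Lam * (int K)^2 \<ge> int K" using big_facts(1)[of "int K"] by simp
    ultimately have "s < Lam * (int K)^2" unfolding K_def by simp
    then have e: "ps Q L cf \<omega> s = ps Q L cf \<omega>' s" using ps_agree[OF V] ag by blast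
    have "dist (trace Q L cf \<omega> s) (trace Q L cf \<omega>' s) \<le>
          dist (trace Q L cf \<omega> s) (ps Q L cf \<omega> s) + dist (trace Q L cf \<omega>' s) (ps Q L cf \<omega>' s)"
      unfolding e by (rule dist_triangle2)
    also have "\<dots> \<le> \<gamma> + \<gamma>" using trace(2)[OF V] by (intro add_mono) auto
    finally show "dist (trace Q L cf \<omega> s) (trace Q L cf \<omega>' s) \<le> \<beta>" using gam_beta by linarith
  qed
  then show ?thesis by blast
qed

end


context constr begin

lemma sq_mono_Lam: "0 \<le> (x::int) \<Longrightarrow> x \<le> y \<Longrightarrow> Lam * x^2 \<le> Lam * y^2"
proof -
  assume "0 \<le> x" "x \<le> y"
  then have "x^2 \<le> y^2" by (intro power_mono) auto
  then show ?thesis using Lam_pos by (intro mult_left_mono) auto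
qed

lemma bad_win:
  assumes "\<not> ((\<forall>s. \<bar>s - t\<bar> \<le> c0 \<longrightarrow> \<not> (\<exists>j. win j s)) \<and> (\<forall>s. \<bar>s - (t + h)\<bar> \<le> c0 \<longrightarrow> \<not> (\<exists>j. win j s)))"
  shows "\<exists>j. Lam * (int j)^2 - c0 - \<bar>h\<bar> \<le> t \<and> t \<le> Lam * (int j)^2 + Lam + c0 + \<bar>h\<bar>"
proof -
  from assms obtain s j where sj: "\<bar>s - t\<bar> \<le> c0 \<or> \<bar>s - (t + h)\<bar> \<le> c0" "win j s" by blast
  have "Lam * (int j)^2 - c0 - \<bar>h\<bar> \<le> t \<and> t \<le> Lam * (int j)^2 + Lam + c0 + \<bar>h\<bar>"
    using sj unfolding win_def by (auto simp: abs_le_iff)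
  then show ?thesis by blast
qed

lemma two_bad:
  assumes c0: "c0 \<ge> 0" and l: "l = Lam + 2*c0" and t: "t > Lam * l^2 + l"
    and b1: "Lam * (int j)^2 - c0 \<le> t" "t \<le> Lam * (int j)^2 + Lam + c0"
    and b2: "Lam * (int j')^2 - c0 \<le> t + (l + 1)" "t + (l+1) \<le> Lam * (int j')^2 + Lam + c0"
  shows False
proof -
  consider "j' = j" | "j' < j" | "j < j'" by linarith
  then show False
  proof cases
    case 1 then show False using b1 b2 l by simp
  next
    case 2
    then have "int j' + 1 \<le> int j" by simp
    then have "Lam * (int j' + 1)^2 \<le> Lam * (int j)^2" by (intro sq_mono_Lam) auto
    moreover have "Lam * (int j' + 1)^2 = Lam * (int j')^2 + 2*(int j' * Lam) + Lam"
      using big_facts(2) by simp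
    moreover have "int j' * Lam \<ge> 0" using Lam_pos by simp
    ultimately show False using b1 b2 l Lam_pos by linarith
  next
    case 3
    then have "int j + 1 \<le> int j'" by simp
    then have "Lam * (int j + 1)^2 \<le> Lam * (int j')^2" by (intro sq_mono_Lam) auto
    moreover have "Lam * (int j + 1)^2 = Lam * (int j)^2 + 2*(int j * Lam) + Lam"
      using big_facts(2) by simp
    moreover have "int j * Lam \<ge> int j" using big_facts(4) by simp
    ultimately have "int j \<le> l" using b1 b2 l Lam_pos c0 by linarith
    then have "Lam * (int j)^2 \<le> Lam * l^2" by (intro sq_mono_Lam) auto
    then show False using b1 t l c0 by linarith
  qed
qed

lemma synd_good:
  assumes V: "valid Q L cf" and V': "valid Q' L' cf'" and h: "int k dvd h" and eta: "\<eta> > 0"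
  shows "\<exists>B M0. B \<ge> 0 \<and> (\<forall>t\<ge>M0. dist (trace Q L cf \<omega> t) (trace Q' L' cf' \<omega>' (t+h)) < \<eta> \<or>
            dist (trace Q L cf \<omega> (t+B)) (trace Q' L' cf' \<omega>' (t+B+h)) < \<eta>)"
proof -
  have "\<eta>/2 > 0" using eta by simp
  then obtain L0 where U: "UE L0 (\<eta>/2)" using UE_ex by blast
  define c0 where "c0 = int L0 + \<bar>h\<bar>"
  define l where "l = Lam + 2*(c0 + \<bar>h\<bar>)"
  define M0 where "M0 = Lam * l^2 + l + 1 + int L + int L' + int N + c0 + 1"
  have c0: "c0 \<ge> 0" unfolding c0_def by simp
  have lpos: "l \<ge> 0" unfolding l_def using Lam_pos c0 by simp
  have c1: "c0 + \<bar>h\<bar> \<ge> 0" using c0 by simp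
  have "Lam * l^2 \<ge> 0" using Lam_pos by simp
  then have M0: "M0 \<ge> l + 1 + int L + int L' + int N + c0 + 1" unfolding M0_def by simp
  define good where "good t \<longleftrightarrow> (\<forall>s. \<bar>s - t\<bar> \<le> c0 \<longrightarrow> \<not> (\<exists>j. win j s)) \<and>
      (\<forall>s. \<bar>s - (t + h)\<bar> \<le> c0 \<longrightarrow> \<not> (\<exists>j. win j s))" for t
  have G: "dist (trace Q L cf \<omega> t) (trace Q' L' cf' \<omega>' (t+h)) < \<eta>" if gt: "good t" "t \<ge> M0" for t
  proof -
    have "dist (trace Q L cf \<omega> t) (P t) < \<eta>/2"
    proof (rule near_P[OF V U])
      fix s assume a: "\<bar>s - t\<bar> \<le> int L0"
      then have "\<bar>s - t\<bar> \<le> c0" unfolding c0_def by simp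
      then have "\<not> (\<exists>j. win j s)" using gt(1) unfolding good_def by blast
      moreover have "s > int L + int N" using a gt(2) M0 lpos abs_ge_zero[of h] abs_le_iff[of h "\<bar>h\<bar>"] unfolding c0_def abs_le_iff by linarith
      ultimately show "s > int L + int N \<and> \<not> (\<exists>j. win j s)" by blast
    qed
    moreover have "dist (trace Q' L' cf' \<omega>' (t+h)) (P (t+h)) < \<eta>/2"
    proof (rule near_P[OF V' U])
      fix s assume a: "\<bar>s - (t+h)\<bar> \<le> int L0"
      then have "\<bar>s - (t+h)\<bar> \<le> c0" unfolding c0_def by simp
      then have "\<not> (\<exists>j. win j s)" using gt(1) unfolding good_def by blast
      moreover have "s > int L' + int N" using a gt(2) M0 lpos abs_ge_zero[of h] abs_le_iff[of h "\<bar>h\<bar>"] unfolding c0_def abs_le_iff by linarith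
      ultimately show "s > int L' + int N \<and> \<not> (\<exists>j. win j s)" by blast
    qed
    moreover have "P (t+h) = P t" using P_period[OF h] .
    ultimately show ?thesis using dist_triangle2[of "trace Q L cf \<omega> t" "trace Q' L' cf' \<omega>' (t+h)" "P t"]
      by simp
  qed
  have "good t \<or> good (t + (l+1))" if t: "t \<ge> M0" for t
  proof (rule ccontr)
    assume "\<not> ?thesis"
    then have "\<not> good t" "\<not> good (t + (l+1))" by auto
    from bad_win[OF this(1)[unfolded good_def]] obtain j where
      j: "Lam * (int j)^2 - c0 - \<bar>h\<bar> \<le> t" "t \<le> Lam * (int j)^2 + Lam + c0 + \<bar>h\<bar>" by blast
    from bad_win[OF \<open>\<not> good (t + (l+1))\<close>[unfolded good_def]] obtain j' where
      j': "Lam * (int j')^2 - c0 - \<bar>h\<bar> \<le> t + (l+1)" "t + (l+1) \<le> Lam * (int j')^2 + Lam + c0 + \<bar>h\<bar>" by blast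
    have tb: "t > Lam * l^2 + l" using t M0_def c0 lpos by linarith
    show False using two_bad[OF c1 l_def tb] j j' by (simp add: algebra_simps)
  qed
  then have "\<forall>t\<ge>M0. dist (trace Q L cf \<omega> t) (trace Q' L' cf' \<omega>' (t+h)) < \<eta> \<or>
            dist (trace Q L cf \<omega> (t+(l+1))) (trace Q' L' cf' \<omega>' (t+(l+1)+h)) < \<eta>"
    using G lpos by (metis add_increasing2 le_add_same_cancel1 order_trans zero_le_one add_nonneg_nonneg)
  then show ?thesis using lpos by (intro exI[of _ "l+1"] exI[of _ M0]) simp
qed

end


lemma cantor_embed:
  fixes F :: "(nat \<Rightarrow> bool) \<Rightarrow> 'a::metric_space"
  assumes inj: "inj F" and c: "\<And>s e. e > 0 \<Longrightarrow> \<exists>K. \<forall>s'. (\<forall>i<K. s' i = s i) \<longrightarrow> dist (F s') (F s) < e"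
  shows "cantor_set (range F)"
proof -
  let ?PT = "product_topology (\<lambda>_::nat. discrete_topology (UNIV::bool set)) UNIV"
  have tops: "topspace ?PT = UNIV" by (simp add: PiE_UNIV_domain)
  have cs: "compact_space ?PT" by (simp add: compact_space_product_topology compact_space_discrete_topology)
  have cm: "continuous_map ?PT euclidean F"
    unfolding continuous_map_def
  proof (intro conjI allI impI)
    show "F \<in> topspace ?PT \<rightarrow> topspace euclidean" by simp
    fix U :: "'a set" assume "openin euclidean U"
    then have oU: "open U" by simp
    show "openin ?PT {x \<in> topspace ?PT. F x \<in> U}"
      unfolding openin_product_topology_alt
    proof (intro ballI)
      fix s assume "s \<in> {x \<in> topspace ?PT. F x \<in> U}"
      then have "F s \<in> U" by simp
      then obtain e where e: "e > 0" "ball (F s) e \<subseteq> U" using oU open_contains_ball by blast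
      obtain K where K: "\<And>s'. (\<forall>i<K. s' i = s i) \<Longrightarrow> dist (F s') (F s) < e" using c[OF e(1)] by blast
      define V where "V i = (if i < K then {s i} else UNIV)" for i
      have "finite {i \<in> UNIV. V i \<noteq> topspace (discrete_topology UNIV)}"
        by (rule finite_subset[of _ "{..<K}"]) (auto simp: V_def)
      moreover have "\<forall>i\<in>UNIV. openin (discrete_topology UNIV) (V i)" by simp
      moreover have "s \<in> Pi\<^sub>E UNIV V" by (simp add: V_def PiE_iff)
      moreover have "Pi\<^sub>E UNIV V \<subseteq> {x \<in> topspace ?PT. F x \<in> U}"
      proof
        fix s' assume "s' \<in> Pi\<^sub>E UNIV V"
        then have "\<forall>i. s' i \<in> V i" by (simp add: PiE_iff)
        then have "\<forall>i<K. s' i = s i" unfolding V_def by (metis singletonD)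
        then have "F s' \<in> ball (F s) e" using K by (simp add: dist_commute)
        then show "s' \<in> {x \<in> topspace ?PT. F x \<in> U}" using e(2) tops by auto
      qed
      ultimately show "\<exists>V. finite {i \<in> UNIV. V i \<noteq> topspace (discrete_topology UNIV)} \<and>
                 (\<forall>i\<in>UNIV. openin (discrete_topology UNIV) (V i)) \<and> s \<in> Pi\<^sub>E UNIV V \<and>
                 Pi\<^sub>E UNIV V \<subseteq> {x \<in> topspace ?PT. F x \<in> U}" by blast
    qed
  qed
  have "embedding_map ?PT euclidean F"
    by (rule continuous_imp_embedding_map[OF cm cs]) (use inj in \<open>auto simp: tops\<close>)
  from embedding_map_imp_homeomorphic_space[OF this]
  have "?PT homeomorphic_space top_of_set (range F)" unfolding tops by simp
  then show ?thesis unfolding cantor_set_def by (rule homeomorphic_space_sym[THEN iffD1])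
qed



definition om :: "nat \<Rightarrow> (nat \<Rightarrow> bool) \<Rightarrow> nat \<Rightarrow> bool" where
  "om l s i = (if i = 0 then True else if odd i then s ((i - 1) div 2) else (i div 2 - 1 = l))"

lemma om0: "om l s 0" unfolding om_def by simp

lemma om_odd: "om l s (2*q+1) = s q" unfolding om_def by simp

lemma om_even: "om l s (2*q+2) = (q = l)" unfolding om_def by simp

lemma om_inj: "om l s = om l' s' \<Longrightarrow> l = l' \<and> s = s'"
proof -
  assume e: "om l s = om l' s'"
  have "l = l'" using fun_cong[OF e, of "2*l+2"] unfolding om_even by simp
  moreover have "s = s'"
  proof
    fix q show "s q = s' q" using fun_cong[OF e, of "2*q+1"] unfolding om_odd .
  qed
  ultimately show ?thesis by blast
qed

lemma om_agree:
  assumes "\<forall>i<K. s' i = s i" shows "\<forall>i<K. om l s' i = om l s i"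
proof (intro allI impI)
  fix i assume "i < K"
  then have "(i - 1) div 2 < K" by linarith
  then show "om l s' i = om l s i" unfolding om_def using assms by simp
qed

locale constr2 = constr +
  fixes cen :: "nat \<Rightarrow> 'a" and Lf :: "nat \<Rightarrow> nat" and Qf :: "nat \<Rightarrow> int \<Rightarrow> 'a" and cff :: "nat \<Rightarrow> nat \<Rightarrow> 'a"
  assumes cenY: "cen i \<in> Y" and cen_dense: "\<And>y e. y \<in> Y \<Longrightarrow> e > 0 \<Longrightarrow> \<exists>i. dist y (cen i) < e"
    and LfU: "UE (Lf l) (1 / (real l + 1))"
    and Qf0: "Qf l 0 = cen (fst (prod_decode l))"
    and Vf: "valid (Qf l) (Lf l) (cff l)"
begin

definition Z :: "nat \<Rightarrow> (nat \<Rightarrow> bool) \<Rightarrow> int \<Rightarrow> 'a" where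
  "Z l s = trace (Qf l) (Lf l) (cff l) (om l s)"

definition F :: "nat \<Rightarrow> nat \<Rightarrow> (nat \<Rightarrow> bool) \<Rightarrow> 'a" where
  "F l m s = Z l s (int (k*m))"

lemma Zorb: "full_orbit Y g (Z l s)" unfolding Z_def by (rule trace(1)[OF Vf])

lemma Zshift: "Z l s (t + int n) = (g^^n) (Z l s t)" by (rule orbit_shift[OF Zorb])

lemma freq:
  assumes ne: "(l1, s1, m1) \<noteq> (l2, s2, m2)"
  shows "\<exists>n\<ge>M. dist (Z l1 s1 (int n + int (k*m1))) (Z l2 s2 (int n + int (k*m2))) > eps"
proof -
  define h where "h = int (k*m2) - int (k*m1)"
  show ?thesis
  proof (cases "om l1 s1 = om l2 s2")
    case False
    then obtain i0 where i0: "om l1 s1 i0 \<noteq> om l2 s2 i0" by blast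
    show ?thesis
    proof (cases "om l1 s1 i0")
      case True
      have w2: "\<not> om l2 s2 i0" using True i0 by simp
      from sep_diff[where \<omega>="om l1 s1" and \<omega>'="om l2 s2" and Q="Qf l1" and L="Lf l1" and cf="cff l1"
        and Q'="Qf l2" and L'="Lf l2" and cf'="cff l2" and M="int M + int (k*m1)" and h=h, OF Vf Vf True w2]
      obtain t where t: "t \<ge> int M + int (k*m1)" "dist (Z l1 s1 t) (Z l2 s2 (t + h)) > eps"
        unfolding Z_def by auto
      define n where "n = nat (t - int (k*m1))"
      have "int n + int (k*m1) = t" "int n + int (k*m2) = t + h" using t(1) unfolding n_def h_def by auto
      moreover have "n \<ge> M" using t(1) unfolding n_def by linarith
      ultimately show ?thesis using t(2) by metis
    next
      case False
      then have T2: "om l2 s2 i0" using i0 by simp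
      from sep_diff[where \<omega>="om l2 s2" and \<omega>'="om l1 s1" and Q="Qf l2" and L="Lf l2" and cf="cff l2"
        and Q'="Qf l1" and L'="Lf l1" and cf'="cff l1" and M="int M + int (k*m2)" and h="-h", OF Vf Vf T2 False]
      obtain t where t: "t \<ge> int M + int (k*m2)" "dist (Z l2 s2 t) (Z l1 s1 (t + - h)) > eps"
        unfolding Z_def by auto
      define n where "n = nat (t - int (k*m2))"
      have "int n + int (k*m2) = t" "int n + int (k*m1) = t + - h" using t(1) unfolding n_def h_def by auto
      moreover have "n \<ge> M" using t(1) unfolding n_def by linarith
      ultimately show ?thesis using t(2) by (metis dist_commute)
    qed
  next
    case True
    then have e: "l1 = l2" "s1 = s2" using om_inj by auto
    then have "m1 \<noteq> m2" using ne by auto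
    then have "k*m1 \<noteq> k*m2" using k1 by simp
    then have h0: "h \<noteq> 0" unfolding h_def by simp
    from sep_same[where \<omega>="om l1 s1" and Q="Qf l1" and L="Lf l1" and cf="cff l1" and M="int M + int (k*m1)", OF Vf om0 h0]
    obtain t where t: "t \<ge> int M + int (k*m1)" "dist (Z l1 s1 t) (Z l1 s1 (t + h)) > eps"
      unfolding Z_def by auto
    define n where "n = nat (t - int (k*m1))"
    have "int n + int (k*m1) = t" "int n + int (k*m2) = t + h" using t(1) unfolding n_def h_def by auto
    moreover have "n \<ge> M" using t(1) unfolding n_def by linarith
    ultimately show ?thesis using t(2) e by metis
  qed
qed

lemma injF: "inj (F l m)"
proof (rule injI)
  fix s s' assume e: "F l m s = F l m s'"
  show "s = s'"
  proof (rule ccontr)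
    assume "s \<noteq> s'"
    then have "(l, s, m) \<noteq> (l, s', m)" by simp
    from freq[OF this, of 0] obtain n where
      n: "dist (Z l s (int n + int (k*m))) (Z l s' (int n + int (k*m))) > eps" by blast
    have "Z l s (int (k*m) + int n) = Z l s' (int (k*m) + int n)"
      unfolding Zshift using e unfolding F_def by simp
    then show False using n eps_pos by (simp add: add.commute)
  qed
qed

lemma contF:
  assumes e: "e > 0"
  shows "\<exists>K. \<forall>s'. (\<forall>i<K. s' i = s i) \<longrightarrow> dist (F l m s') (F l m s) < e"
proof -
  obtain \<rho> where \<rho>: "\<rho> > 0" "\<And>x x'. x\<in>Y \<Longrightarrow> x'\<in>Y \<Longrightarrow> dist x' x < \<rho> \<Longrightarrow> dist ((g^^(k*m)) x') ((g^^(k*m)) x) < e"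
    using uniformly_continuous_onE[OF compact_uniformly_continuous[OF gpow_cont cY] e] by blast
  obtain K where K: "\<forall>\<omega> \<omega>'. (\<forall>i<K. \<omega> i = \<omega>' i) \<longrightarrow> dist (trace (Qf l) (Lf l) (cff l) \<omega> 0) (trace (Qf l) (Lf l) (cff l) \<omega>' 0) < \<rho>"
    using cont_code[OF Vf \<rho>(1)] by blast
  have "dist (F l m s') (F l m s) < e" if ag: "\<forall>i<K. s' i = s i" for s'
  proof -
    have "\<forall>i<K. om l s' i = om l s i" by (rule om_agree[OF ag])
    then have "dist (Z l s' 0) (Z l s 0) < \<rho>" using K unfolding Z_def by blast
    then have "dist ((g^^(k*m)) (Z l s' 0)) ((g^^(k*m)) (Z l s 0)) < e"
      using \<rho>(2) orbit_in[OF Zorb] by blast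
    moreover have "F l m s = (g^^(k*m)) (Z l s 0)" "F l m s' = (g^^(k*m)) (Z l s' 0)"
      unfolding F_def using Zshift[of l s 0 "k*m"] Zshift[of l s' 0 "k*m"] by auto
    ultimately show ?thesis by simp
  qed
  then show ?thesis by blast
qed

lemma cantorF: "cantor_set (range (F l m))"
  by (rule cantor_embed[OF injF contF])

lemma FY: "F l m s \<in> Y" unfolding F_def by (rule orbit_in[OF Zorb])

lemma Fshift: "(g^^n) (F l m s) = Z l s (int n + int (k*m))"
  unfolding F_def using Zshift[of l s "int (k*m)" n] by (simp add: add.commute)

lemma Finv: "(g^^k) (F l m s) = F l (Suc m) s"
  using Fshift[of k l m s] unfolding F_def by (simp add: algebra_simps)

lemma synd:
  assumes eta: "\<eta> > 0"
  shows "syndetic {n. dist ((g^^n) (F l1 m1 s1)) ((g^^n) (F l2 m2 s2)) < \<eta>}"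
proof -
  define h where "h = int (k*m2) - int (k*m1)"
  have hd: "int k dvd h" unfolding h_def by (simp add: dvd_diff)
  from synd_good[where \<omega>="om l1 s1" and \<omega>'="om l2 s2" and Q="Qf l1" and L="Lf l1" and cf="cff l1"
        and Q'="Qf l2" and L'="Lf l2" and cf'="cff l2", OF Vf Vf hd eta]
  obtain B M0 where B: "B \<ge> 0" and BM: "\<And>t. t \<ge> M0 \<Longrightarrow> dist (Z l1 s1 t) (Z l2 s2 (t+h)) < \<eta> \<or>
            dist (Z l1 s1 (t+B)) (Z l2 s2 (t+B+h)) < \<eta>" unfolding Z_def by blast
  show ?thesis unfolding syndetic_def
  proof (intro allI impI)
    fix A assume "thick A"
    then obtain m0 where m0: "{m0..<m0 + (nat M0 + nat B + 1)} \<subseteq> A" unfolding thick_def by blast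
    define n0 where "n0 = m0 + nat M0"
    define t where "t = int n0 + int (k*m1)"
    have "t \<ge> M0" unfolding t_def n0_def by linarith
    from BM[OF this] have "n0 \<in> {n. dist ((g^^n) (F l1 m1 s1)) ((g^^n) (F l2 m2 s2)) < \<eta>} \<or>
       n0 + nat B \<in> {n. dist ((g^^n) (F l1 m1 s1)) ((g^^n) (F l2 m2 s2)) < \<eta>}"
    proof
      assume a: "dist (Z l1 s1 t) (Z l2 s2 (t+h)) < \<eta>"
      have "t + h = int n0 + int (k*m2)" unfolding t_def h_def by simp
      then have "dist (Z l1 s1 (int n0 + int (k*m1))) (Z l2 s2 (int n0 + int (k*m2))) < \<eta>"
        using a unfolding t_def by metis
      then have "n0 \<in> {n. dist ((g^^n) (F l1 m1 s1)) ((g^^n) (F l2 m2 s2)) < \<eta>}"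
        unfolding Fshift by blast
      then show ?thesis by blast
    next
      assume a: "dist (Z l1 s1 (t+B)) (Z l2 s2 (t+B+h)) < \<eta>"
      have "t + B = int (n0 + nat B) + int (k*m1)" "t + B + h = int (n0 + nat B) + int (k*m2)"
        unfolding t_def h_def using B by auto
      then have "dist (Z l1 s1 (int (n0 + nat B) + int (k*m1))) (Z l2 s2 (int (n0 + nat B) + int (k*m2))) < \<eta>"
        using a by metis
      then have "n0 + nat B \<in> {n. dist ((g^^n) (F l1 m1 s1)) ((g^^n) (F l2 m2 s2)) < \<eta>}"
        unfolding Fshift by blast
      then show ?thesis by blast
    qed
    moreover have "n0 \<in> A" "n0 + nat B \<in> A" using m0 unfolding n0_def by auto
    ultimately show "{n. dist ((g^^n) (F l1 m1 s1)) ((g^^n) (F l2 m2 s2)) < \<eta>} \<inter> A \<noteq> {}" by blast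
  qed
qed

lemma freqF:
  assumes ne: "(l1, s1, m1) \<noteq> (l2, s2, m2)"
  shows "\<exists>n\<ge>M. dist ((g^^n) (F l1 m1 s1)) ((g^^n) (F l2 m2 s2)) > eps"
  unfolding Fshift using freq[OF ne] .

lemma not_tendsto:
  assumes ne: "(l1, s1, m1) \<noteq> (l2, s2, m2)"
  shows "\<not> ((\<lambda>n. dist ((g^^n) (F l1 m1 s1)) ((g^^n) (F l2 m2 s2))) \<longlonglongrightarrow> 0)"
proof
  assume "(\<lambda>n. dist ((g^^n) (F l1 m1 s1)) ((g^^n) (F l2 m2 s2))) \<longlonglongrightarrow> 0"
  from order_tendstoD(2)[OF this eps_pos] obtain M where
    "\<And>n. n \<ge> M \<Longrightarrow> dist ((g^^n) (F l1 m1 s1)) ((g^^n) (F l2 m2 s2)) < eps"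
    unfolding eventually_sequentially by blast
  with freqF[OF ne, of M] show False by force
qed

lemma limsup_ge:
  assumes ne: "(l1, s1, m1) \<noteq> (l2, s2, m2)"
  shows "limsup (\<lambda>n. ereal (dist ((g^^n) (F l1 m1 s1)) ((g^^n) (F l2 m2 s2)))) \<ge> ereal eps"
  unfolding limsup_INF_SUP
proof (rule INF_greatest)
  fix M :: nat
  obtain n where n: "n \<ge> M" "dist ((g^^n) (F l1 m1 s1)) ((g^^n) (F l2 m2 s2)) > eps" using freqF[OF ne] by blast
  then have "ereal eps \<le> ereal (dist ((g^^n) (F l1 m1 s1)) ((g^^n) (F l2 m2 s2)))" by simp
  also have "\<dots> \<le> (SUP m\<in>{M..}. ereal (dist ((g^^m) (F l1 m1 s1)) ((g^^m) (F l2 m2 s2))))"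
    using n(1) by (intro SUP_upper) auto
  finally show "ereal eps \<le> (SUP m\<in>{M..}. ereal (dist ((g^^m) (F l1 m1 s1)) ((g^^m) (F l2 m2 s2))))" .
qed

lemma main2: "\<exists>T. T \<subseteq> Y \<and> Y \<subseteq> closure T \<and> mycielski_set T \<and> (g ^^ k) ` T \<subseteq> T \<and> synd_scrambled Y g eps T"
proof -
  define T where "T = (\<Union>l. \<Union>m. range (F l m))"
  have sub: "T \<subseteq> Y" unfolding T_def using FY by blast
  have dense: "Y \<subseteq> closure T"
  proof
    fix y assume yY: "y \<in> Y"
    show "y \<in> closure T" unfolding closure_approachable
    proof (intro allI impI)
      fix e :: real assume e: "e > 0"
      then obtain i where i: "dist y (cen i) < e/2" using cen_dense[OF yY, of "e/2"] by auto
      obtain r :: nat where r: "real r > 2/e" using reals_Archimedean2 by blast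
      define l where "l = prod_encode (i, r)"
      have lr: "l \<ge> r" unfolding l_def by (rule le_prod_encode_2)
      have "1 / (real l + 1) \<le> 1 / (real r + 1)" using lr by (intro divide_left_mono) auto
      also have "1 / (real r + 1) < e/2"
      proof -
        have "2/e < real r + 1" using r by simp
        then have "2 < (real r + 1) * e" using e by (simp add: divide_less_eq)
        then show ?thesis using e by (simp add: divide_less_eq mult.commute)
      qed
      finally have eta: "1 / (real l + 1) < e/2" .
      define x where "x = F l 0 (\<lambda>_. True)"
      have "dist x (Qf l 0) < 1 / (real l + 1)"
        unfolding x_def F_def Z_def using dens[OF Vf LfU] by simp
      moreover have "Qf l 0 = cen i" unfolding Qf0 l_def by simp
      ultimately have "dist x (cen i) < e/2" using eta by simp
      then have "dist x y < e" using i dist_triangle2[of x y "cen i"] by (simp add: dist_commute)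
      moreover have "x \<in> T" unfolding T_def x_def by blast
      ultimately show "\<exists>x\<in>T. dist x y < e" by blast
    qed
  qed
  have myc: "mycielski_set T" unfolding mycielski_set_def
  proof (intro exI conjI)
    show "countable ((\<lambda>(l,m). range (F l m)) ` (UNIV :: (nat \<times> nat) set))" by simp
    show "\<forall>C\<in>(\<lambda>(l,m). range (F l m)) ` (UNIV :: (nat \<times> nat) set). cantor_set C" using cantorF by auto
    show "T = \<Union> ((\<lambda>(l,m). range (F l m)) ` (UNIV :: (nat \<times> nat) set))" unfolding T_def by auto
  qed
  have inv: "(g ^^ k) ` T \<subseteq> T" unfolding T_def using Finv by blast
  have scr: "synd_scrambled Y g eps T" unfolding synd_scrambled_def
  proof (intro conjI ballI impI allI)
    have "F 0 0 (\<lambda>_. True) \<noteq> F 0 0 (\<lambda>_. False)" using injF[of 0 0] unfolding inj_def by (metis (full_types))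
    then show "\<exists>x\<in>T. \<exists>y\<in>T. x \<noteq> y" unfolding T_def by blast
  next
    fix x y \<eta> assume x: "x \<in> T" and y: "y \<in> T" and ne: "x \<noteq> y" and eta: "(\<eta>::real) > 0"
    obtain l1 m1 s1 where xx: "x = F l1 m1 s1" using x unfolding T_def by blast
    obtain l2 m2 s2 where yy: "y = F l2 m2 s2" using y unfolding T_def by blast
    show "syndetic {n. dist ((g ^^ n) x) ((g ^^ n) y) < \<eta>}" unfolding xx yy by (rule synd[OF eta])
  next
    fix x y assume x: "x \<in> T" and y: "y \<in> T" and ne: "x \<noteq> y"
    obtain l1 m1 s1 where xx: "x = F l1 m1 s1" using x unfolding T_def by blast
    obtain l2 m2 s2 where yy: "y = F l2 m2 s2" using y unfolding T_def by blast
    have ne': "(l1, s1, m1) \<noteq> (l2, s2, m2)" using ne xx yy by auto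
    show "\<not> (\<lambda>n. dist ((g ^^ n) x) ((g ^^ n) y)) \<longlonglongrightarrow> 0" unfolding xx yy by (rule not_tendsto[OF ne'])
    show "ereal eps \<le> limsup (\<lambda>n. ereal (dist ((g ^^ n) x) ((g ^^ n) y)))" unfolding xx yy
      by (rule limsup_ge[OF ne'])
  qed
  show ?thesis using sub dense myc inv scr by blast
qed

end


context TA_sys begin

lemma dense_seq: "\<exists>cen::nat\<Rightarrow>'a. (\<forall>i. cen i \<in> Y) \<and> (\<forall>y\<in>Y. \<forall>e>0. \<exists>i. dist y (cen i) < e)"
proof -
  have "\<forall>n::nat. \<exists>F. finite F \<and> F \<subseteq> Y \<and> Y \<subseteq> (\<Union>x\<in>F. ball x (1/(real n+1)))"
    using finite_cover by simp
  from choice[OF this] obtain Fs where "\<forall>n. finite (Fs n) \<and> Fs n \<subseteq> Y \<and> Y \<subseteq> (\<Union>x\<in>Fs n. ball x (1/(real n+1)))"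
    by blast
  then have Fs: "\<And>n. finite (Fs n)" "\<And>n. Fs n \<subseteq> Y" "\<And>n. Y \<subseteq> (\<Union>x\<in>Fs n. ball x (1/(real n+1)))"
    by auto
  define S where "S = (\<Union>n. Fs n)"
  have cS: "countable S" unfolding S_def by (rule countable_UN) (auto intro: countable_finite Fs(1))
  obtain w where w: "w \<in> Y" using two by blast
  then have "Fs 0 \<noteq> {}" using Fs(3)[of 0] by blast
  then have Sne: "S \<noteq> {}" unfolding S_def by blast
  have SY: "S \<subseteq> Y" unfolding S_def using Fs(2) by blast
  have "\<forall>y\<in>Y. \<forall>e>0. \<exists>i. dist y (from_nat_into S i) < e"
  proof (intro ballI allI impI)
    fix y e assume y: "y \<in> Y" and e: "(e::real) > 0"
    obtain n where n: "inverse (real (Suc n)) < e" using reals_Archimedean[OF e] by blast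
    obtain x where x: "x \<in> Fs n" "y \<in> ball x (1/(real n+1))" using Fs(3)[of n] y by blast
    obtain i where i: "from_nat_into S i = x" using from_nat_into_surj[OF cS, of x] x(1) unfolding S_def by blast
    have "dist x y < 1/(real n+1)" using x(2) by simp
    also have "1/(real n+1) < e" using n by (simp add: inverse_eq_divide add.commute)
    finally show "\<exists>i. dist y (from_nat_into S i) < e" using i by (metis dist_commute)
  qed
  moreover have "\<forall>i. from_nat_into S i \<in> Y" using from_nat_into[OF Sne] SY by blast
  ultimately show ?thesis by blast
qed

end

context constr begin

lemma main1: "\<exists>T. T \<subseteq> Y \<and> Y \<subseteq> closure T \<and> mycielski_set T \<and> (g ^^ k) ` T \<subseteq> T \<and> synd_scrambled Y g eps T"
proof -
  obtain cen :: "nat \<Rightarrow> 'a" where cen: "\<And>i. cen i \<in> Y" "\<And>y e. y \<in> Y \<Longrightarrow> e > 0 \<Longrightarrow> \<exists>i. dist y (cen i) < e"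
    using dense_seq by blast
  have "\<forall>l::nat. \<exists>L0. UE L0 (1/(real l + 1))" using UE_ex by simp
  from choice[OF this] obtain Lf where Lf: "\<And>l. UE (Lf l) (1/(real l + 1))" by blast
  have "\<forall>l. \<exists>Q. full_orbit Y g Q \<and> Q 0 = cen (fst (prod_decode l))"
  proof
    fix l show "\<exists>Q. full_orbit Y g Q \<and> Q 0 = cen (fst (prod_decode l))" by (rule orbit_through[OF cen(1)])
  qed
  from choice[OF this] obtain Qf where "\<forall>l. full_orbit Y g (Qf l) \<and> Qf l 0 = cen (fst (prod_decode l))" by blast
  then have Qf: "\<And>l. full_orbit Y g (Qf l)" "\<And>l. Qf l 0 = cen (fst (prod_decode l))" by auto
  have "\<forall>l. \<exists>cf. valid (Qf l) (Lf l) cf"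
  proof
    fix l
    have a: "Qf l (int (Lf l)) \<in> Y" using orbit_in[OF Qf(1)] by blast
    have b: "P (int (Lf l) + int N) \<in> Y" using P_in by blast
    obtain c where "c 0 = Qf l (int (Lf l))" "c N = P (int (Lf l) + int N)" "\<forall>i. c i \<in> Y"
      "\<forall>i<N. dist (g (c i)) (c (Suc i)) < \<delta>" using chainN[rule_format, OF a b order.refl] by (elim exE conjE) blast
    then show "\<exists>cf. valid (Qf l) (Lf l) cf" unfolding valid_def using Qf(1) by blast
  qed
  from choice[OF this] obtain cff where cff: "\<And>l. valid (Qf l) (Lf l) (cff l)" by blast
  interpret c2: constr2 Y g \<beta> p k aa D \<gamma> \<delta> N cen Lf Qf cff
    by unfold_locales (rule cen(1), erule cen(2), assumption, rule Lf, rule Qf(2), rule cff)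
  show ?thesis by (rule c2.main2)
qed

end

context TA_sys begin

lemma main0: "\<exists>\<epsilon>>0. \<exists>k::nat. k > 0 \<and> (\<exists>T. T \<subseteq> Y \<and> Y \<subseteq> closure T \<and> mycielski_set T \<and>
           (g ^^ k) ` T \<subseteq> T \<and> synd_scrambled Y g \<epsilon> T)"
proof -
  obtain p k where pk: "p \<in> Y" "k \<ge> 1" "(g^^k) p = p" using periodic_point by blast
  define Orb where "Orb = (\<lambda>i. (g^^i) p) ` {..<k}"
  have "finite Orb" unfolding Orb_def by simp
  then have "\<not> Y \<subseteq> Orb" using Y_infinite finite_subset by blast
  then obtain aa where aa: "aa \<in> Y" "aa \<notin> Orb" by blast
  define D where "D = Min ((\<lambda>i. dist aa ((g^^i) p)) ` {..<k})"
  have Dpos: "D > 0" unfolding D_def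
  proof (subst Min_gr_iff)
    show "finite ((\<lambda>i. dist aa ((g^^i) p)) ` {..<k})" by simp
    have "0 \<in> {..<k}" using pk(2) by simp
    then show "(\<lambda>i. dist aa ((g^^i) p)) ` {..<k} \<noteq> {}" by blast
    show "\<forall>a\<in>(\<lambda>i. dist aa ((g^^i) p)) ` {..<k}. 0 < a" using aa(2) unfolding Orb_def by auto
  qed
  have aD: "D \<le> dist aa ((g^^i) p)" for i
  proof -
    have "(g^^i) p = (g^^(i mod k)) p" using funpow_mod_eq[of k g p i] pk(3) by simp
    moreover have "i mod k < k" using pk(2) by simp
    ultimately show ?thesis unfolding D_def by (metis (no_types, lifting) Min_le finite_imageI finite_lessThan
          image_eqI lessThan_iff)
  qed
  define \<gamma> where "\<gamma> = min (\<beta>/2) (D/4)"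
  have gpos: "\<gamma> > 0" unfolding \<gamma>_def using beta_pos Dpos by simp
  from FOS[OF gpos] obtain \<delta> where d: "\<delta> > 0" "\<forall>y::int\<Rightarrow>'a. (\<forall>t. y t \<in> Y) \<and> (\<forall>t. dist (g (y t)) (y (t+1)) < \<delta>) \<longrightarrow>
           (\<exists>X. full_orbit Y g X \<and> (\<forall>t. dist (X t) (y t) \<le> \<gamma>))" by (elim exE conjE)
  from chain_lemma[OF d(1)] obtain N where N: "N \<ge> 2" "\<forall>a\<in>Y. \<forall>b\<in>Y. \<forall>n\<ge>N. \<exists>c::nat\<Rightarrow>'a. c 0 = a \<and> c n = b \<and> (\<forall>i. c i \<in> Y) \<and>
            (\<forall>i<n. dist (g (c i)) (c (Suc i)) < \<delta>)" by (elim exE conjE)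
  interpret c: constr Y g \<beta> p k aa D \<gamma> \<delta> N
    by unfold_locales (use pk aa Dpos aD gpos d N in \<open>auto simp: \<gamma>_def\<close>)
  from c.main1 c.eps_pos pk(2) show ?thesis by (metis less_le_trans zero_less_one)
qed

end



theorem corollary4p15:
  fixes Y :: "'a::metric_space set" and g :: "'a \<Rightarrow> 'a"
  assumes "compact Y"
    and "\<exists>a\<in>Y. \<exists>b\<in>Y. a \<noteq> b"
    and "TA_map Y g"
    and "top_mixing Y g"
  shows "\<exists>\<epsilon>>0. \<exists>k::nat. k > 0 \<and> (\<exists>T. T \<subseteq> Y \<and> Y \<subseteq> closure T \<and> mycielski_set T \<and>
           (g ^^ k) ` T \<subseteq> T \<and> synd_scrambled Y g \<epsilon> T)"
proof -
  from assms(3) obtain \<beta> where b: "continuous_on Y g" "g ` Y = Y" "c_expansive_with Y g \<beta>" "shadowing Y g"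
    unfolding TA_map_def c_expansive_def continuous_surjection_def by blast
  interpret TA_sys Y g \<beta>
    by unfold_locales (use assms b in auto)
  show ?thesis by (rule main0)
qed

end
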